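(* The randomized modified multiplicative price update algorithm is a universally truthful mechanism without money and with verification for CAs with unknown $k$-minded bidders and goods of supply $b$; it always outputs an allocation in which each good is allocated at most $b$ times, and its expected approximation ratio is $O(d^{1/b}\log(bm))$, where $d$ is the maximum cardinality of a demanded set with positive valuation.
   Context: Multi-unit combinatorial auction: a set $\mathsf U$ of $m$ goods, each with supply $b\ge1$; $n$ bidders. True type of bidder $i$: $t_i=(v_i,\mathcal S_i)$ with $\mathcal S_i$ a private collection of $k$ nonempty subsets of $\mathsf U$ and $v_i:\mathcal S_i\to\mathbb R_{\ge0}$ private, extended by $v_i(T)=\max\{v_i(S'):S'\in\mathcal S_i,S'\subseteq T\}$ ($0$ if none). Declarations $(w,\mathcal W)$ have the same form. Randomized modified algorithm on declarations $(w_i,\mathcal W_i)$: let $v^i_{\max}=\max_{S\in\mathcal W_i}w_i(S)$, $j$ the bidder with largest $v^j_{\max}$ (smallest index on ties), $\mu=(1+\epsilon)v^j_{\max}$ for fixed $0<\epsilon\ll1$, $p_0=\mu/(4bm)$, $r=2^{1/b}$, $q=1/(2\mathrm e\, d^{1/b}\log(4bm))$; initially each good $e$ has price $p_e=p_0$ and remaining supply $b_e=b$. Process bidders in order $j,1,\dots,j-1,j+1,\dots,n$; for bidder $i$: let $\mathsf U_i=\{e:b_e>0\}$, let $S_i$ maximize $w_i(S)$ over $S\in\mathcal W_i$ with $S\subseteq\mathsf U_i$ and $w_i(S)\ge\sum_{e\in S}p_e$ ($\emptyset$ if none); multiply $p_e$ by $r$ for $e\in S_i$; set $R_i=S_i$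 if $i=j$, and otherwise $R_i=S_i$ with probability $q$ and $R_i=\emptyset$ with probability $1-q$ (independently); decrease $b_e$ by one for every $e\in R_i$. Output $(R_1,\dots,R_n)$. Verification: bidder $i$ with true type $t_i$ facing $\mathbf b_{-i}$ may declare $b_i=(z,\mathcal T)$ only if $z(A_i(b_i,\mathbf b_{-i}))\le v_i(A_i(b_i,\mathbf b_{-i}))$. A deterministic mechanism is truthful without money and with verification if for all $i$, $\mathbf b_{-i}$, true $t_i$ and permitted $b_i$, $v_i(A_i(t_i,\mathbf b_{-i}))\ge v_i(A_i(b_i,\mathbf b_{-i}))$; a randomized mechanism is universally truthful if it is a probability distribution over such deterministic mechanisms. Expected approximation ratio $\alpha$: on every truthful input, the expected social welfare is at least $\mathrm{OPT}/\alpha$, $\mathrm{OPT}$ being the maximum welfare of an allocation giving each good at most $b$ times. *)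

theory Defs
  imports "HOL-Probability.Probability"
begin

text \<open>Goods and bidders are natural numbers.  A type / declaration is a pair (v, S)
  of a value function and a finite collection of demanded sets.\<close>

type_synonym decl = "(nat set \<Rightarrow> real) \<times> nat set set"

definition valid_type :: "nat set \<Rightarrow> nat \<Rightarrow> decl \<Rightarrow> bool" where
  "valid_type U k t \<longleftrightarrow> finite (snd t) \<and> card (snd t) = k \<and>
     (\<forall>S\<in>snd t. S \<noteq> {} \<and> S \<subseteq> U \<and> 0 \<le> fst t S)"

definition val :: "decl \<Rightarrow> nat set \<Rightarrow> real" where
  "val t T = Max (insert 0 {fst t S' | S'. S' \<in> snd t \<and> S' \<subseteq> T})"

definition vmax :: "decl \<Rightarrow> real" where
  "vmax t = Max (val t ` snd t)"

definition winner :: "nat \<Rightarrow> (nat \<Rightarrow> decl) \<Rightarrow> nat" where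
  "winner n decl = (LEAST j. j < n \<and> (\<forall>i<n. vmax (decl i) \<le> vmax (decl j)))"

definition choose_set :: "decl \<Rightarrow> (nat \<Rightarrow> real) \<Rightarrow> nat set \<Rightarrow> nat set" where
  "choose_set t p Ui =
     (let C = {S \<in> snd t. S \<subseteq> Ui \<and> (\<Sum>e\<in>S. p e) \<le> val t S}
      in if C = {} then {} else (SOME S. S \<in> C \<and> (\<forall>S'\<in>C. val t S' \<le> val t S)))"

text \<open>One step of the algorithm for bidder i; state = (prices, remaining supplies, allocation).
  The coin c i decides whether a non-first bidder receives its chosen set.\<close>
definition mpu_step ::
  "nat set \<Rightarrow> real \<Rightarrow> nat \<Rightarrow> (nat \<Rightarrow> decl) \<Rightarrow> (nat \<Rightarrow> bool) \<Rightarrow> nat \<Rightarrow>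
   (nat \<Rightarrow> real) \<times> (nat \<Rightarrow> nat) \<times> (nat \<Rightarrow> nat set) \<Rightarrow>
   (nat \<Rightarrow> real) \<times> (nat \<Rightarrow> nat) \<times> (nat \<Rightarrow> nat set)" where
  "mpu_step U r j decl c i st =
     (case st of (p, s, R) \<Rightarrow>
       (let Ui = {e \<in> U. 0 < s e};
            Si = choose_set (decl i) p Ui;
            Ri = (if i = j \<or> c i then Si else {})
        in (\<lambda>e. if e \<in> Si then r * p e else p e,
            \<lambda>e. if e \<in> Ri then s e - 1 else s e,
            R(i := Ri))))"

text \<open>The deterministic mechanism obtained by fixing the coin outcomes c
  (c i = True: bidder i's tentative set is accepted; probability q each, independently).\<close>
definition mpu_alloc ::
  "nat set \<Rightarrow> nat \<Rightarrow> nat \<Rightarrow> real \<Rightarrow> (nat \<Rightarrow> decl) \<Rightarrow> (nat \<Rightarrow> bool) \<Rightarrow> nat \<Rightarrow> nat set" where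
  "mpu_alloc U n b eps decl c =
     (let m = card U;
          j = winner n decl;
          mu = (1 + eps) * vmax (decl j);
          p0 = mu / (4 * real b * real m);
          r = 2 powr (1 / real b);
          ord = j # filter (\<lambda>i. i \<noteq> j) [0..<n]
      in snd (snd (fold (mpu_step U r j decl c) ord (\<lambda>_. p0, \<lambda>_. b, \<lambda>_. {}))))"

definition qprob :: "nat \<Rightarrow> nat \<Rightarrow> nat \<Rightarrow> real" where
  "qprob b m d = 1 / (2 * exp 1 * real d powr (1 / real b) * log 2 (real (4 * b * m)))"

definition coins :: "nat \<Rightarrow> nat \<Rightarrow> nat \<Rightarrow> nat \<Rightarrow> (nat \<Rightarrow> bool) pmf" where
  "coins n b m d = Pi_pmf {..<n} False (\<lambda>_. bernoulli_pmf (qprob b m d))"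

definition welfare :: "nat \<Rightarrow> (nat \<Rightarrow> decl) \<Rightarrow> (nat \<Rightarrow> nat set) \<Rightarrow> real" where
  "welfare n t A = (\<Sum>i<n. val (t i) (A i))"

definition feasible :: "nat set \<Rightarrow> nat \<Rightarrow> nat \<Rightarrow> (nat \<Rightarrow> nat set) \<Rightarrow> bool" where
  "feasible U n b A \<longleftrightarrow> (\<forall>i<n. A i \<subseteq> U) \<and> (\<forall>e\<in>U. card {i \<in> {..<n}. e \<in> A i} \<le> b)"

definition OPT :: "nat set \<Rightarrow> nat \<Rightarrow> nat \<Rightarrow> (nat \<Rightarrow> decl) \<Rightarrow> real" where
  "OPT U n b t = Max (welfare n t ` {A. A \<in> {..<n} \<rightarrow>\<^sub>E Pow U \<and> feasible U n b A})"

definition truthful_verif ::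
  "nat set \<Rightarrow> nat \<Rightarrow> nat \<Rightarrow> ((nat \<Rightarrow> decl) \<Rightarrow> nat \<Rightarrow> nat set) \<Rightarrow> bool" where
  "truthful_verif U n k M \<longleftrightarrow>
     (\<forall>decl i t bi. (\<forall>l<n. valid_type U k (decl l)) \<longrightarrow> i < n \<longrightarrow>
        valid_type U k t \<longrightarrow> valid_type U k bi \<longrightarrow>
        val bi (M (decl(i := bi)) i) \<le> val t (M (decl(i := bi)) i) \<longrightarrow>
        val t (M (decl(i := bi)) i) \<le> val t (M (decl(i := t)) i))"

end

theory Submission
  imports Defs
begin


lemma mart_fold:
  fixes g :: "nat \<Rightarrow> bool \<Rightarrow> 'a \<Rightarrow> 'a" and \<Phi> :: "'a \<Rightarrow> real"
  assumes inv: "\<And>i y st. Inv st \<Longrightarrow> Inv (g i y st)"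
    and step: "\<And>i st. i \<in> set L \<Longrightarrow> Inv st \<Longrightarrow> q * \<Phi> (g i True st) + (1 - q) * \<Phi> (g i False st) \<le> \<Phi> st"
    and q: "0 \<le> q" "q \<le> 1"
    and L: "distinct L" "set L \<subseteq> A" "finite A"
    and st: "Inv st"
  shows "measure_pmf.expectation (Pi_pmf A False (\<lambda>_. bernoulli_pmf q))
           (\<lambda>c. \<Phi> (fold (\<lambda>i. g i (c i)) L st)) \<le> \<Phi> st"
  using L st step
proof (induction L arbitrary: A st)
  case Nil
  then show ?case by simp
next
  case (Cons i L)
  define A' where "A' = A - {i}"
  have A: "A = insert i A'" "finite A'" "i \<notin> A'" using Cons.prems unfolding A'_def by auto
  have sub: "set L \<subseteq> A'" using Cons.prems unfolding A'_def by auto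
  have fin: "finite (set_pmf (Pi_pmf A' False (\<lambda>_. bernoulli_pmf q)))"
    using A(2) by (auto simp: set_Pi_pmf intro!: finite_PiE_dflt)
  have eq: "\<And>f y. fold (\<lambda>k. g k (if k = i then y else f k)) L (g i y st) = fold (\<lambda>k. g k (f k)) L (g i y st)"
  proof -
    fix f y
    show "fold (\<lambda>k. g k (if k = i then y else f k)) L (g i y st) = fold (\<lambda>k. g k (f k)) L (g i y st)"
      using Cons.prems(1) by (intro fold_cong) auto
  qed
  have IH: "\<And>y. measure_pmf.expectation (Pi_pmf A' False (\<lambda>_. bernoulli_pmf q))
           (\<lambda>c. \<Phi> (fold (\<lambda>k. g k (c k)) L (g i y st))) \<le> \<Phi> (g i y st)"
    using Cons.IH[of A'] Cons.prems sub A inv by auto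
  have "measure_pmf.expectation (Pi_pmf A False (\<lambda>_. bernoulli_pmf q))
           (\<lambda>c. \<Phi> (fold (\<lambda>k. g k (c k)) (i # L) st))
      = measure_pmf.expectation (bernoulli_pmf q \<bind> (\<lambda>y. map_pmf (\<lambda>f. f(i:=y)) (Pi_pmf A' False (\<lambda>_. bernoulli_pmf q))))
           (\<lambda>c. \<Phi> (fold (\<lambda>k. g k (c k)) (i # L) st))"
    unfolding A(1) Pi_pmf_insert'[OF A(2,3)] map_pmf_def by simp
  also have "\<dots> = (\<Sum>y\<in>UNIV. pmf (bernoulli_pmf q) y *
        measure_pmf.expectation (Pi_pmf A' False (\<lambda>_. bernoulli_pmf q))
           (\<lambda>c. \<Phi> (fold (\<lambda>k. g k (c k)) L (g i y st))))"
    by (subst pmf_expectation_bind[of UNIV]) (use fin in \<open>auto simp: eq\<close>)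
  also have "\<dots> = q * measure_pmf.expectation (Pi_pmf A' False (\<lambda>_. bernoulli_pmf q))
           (\<lambda>c. \<Phi> (fold (\<lambda>k. g k (c k)) L (g i True st))) +
      (1 - q) * measure_pmf.expectation (Pi_pmf A' False (\<lambda>_. bernoulli_pmf q))
           (\<lambda>c. \<Phi> (fold (\<lambda>k. g k (c k)) L (g i False st)))"
    using q by (simp add: UNIV_bool)
  also have "\<dots> \<le> q * \<Phi> (g i True st) + (1 - q) * \<Phi> (g i False st)"
    using IH q by (intro add_mono mult_left_mono) auto
  also have "\<dots> \<le> \<Phi> st" using Cons.prems by auto
  finally show ?case .
qed

lemma mart_fold2:
  fixes g :: "nat \<Rightarrow> bool \<Rightarrow> 'a \<Rightarrow> 'a" and \<Phi> :: "'a \<Rightarrow> real" and Inv :: "nat set \<Rightarrow> 'a \<Rightarrow> bool"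
  assumes inv: "\<And>i y st B. i \<in> B \<Longrightarrow> Inv B st \<Longrightarrow> Inv (B - {i}) (g i y st)"
    and step: "\<And>i st B. i \<in> B \<Longrightarrow> Inv B st \<Longrightarrow> q * \<Phi> (g i True st) + (1 - q) * \<Phi> (g i False st) \<le> \<Phi> st"
    and q: "0 \<le> q" "q \<le> 1"
    and L: "distinct L" "set L \<subseteq> A" "finite A"
    and st: "Inv (set L) st"
  shows "measure_pmf.expectation (Pi_pmf A False (\<lambda>_. bernoulli_pmf q))
           (\<lambda>c. \<Phi> (fold (\<lambda>i. g i (c i)) L st)) \<le> \<Phi> st"
  using L st
proof (induction L arbitrary: A st)
  case Nil
  then show ?case by simp
next
  case (Cons i L)
  define A' where "A' = A - {i}"
  have A: "A = insert i A'" "finite A'" "i \<notin> A'" using Cons.prems unfolding A'_def by auto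
  have sub: "set L \<subseteq> A'" using Cons.prems unfolding A'_def by auto
  have fin: "finite (set_pmf (Pi_pmf A' False (\<lambda>_. bernoulli_pmf q)))"
    using A(2) by (auto simp: set_Pi_pmf intro!: finite_PiE_dflt)
  have eq: "\<And>f y. fold (\<lambda>k. g k (if k = i then y else f k)) L (g i y st) = fold (\<lambda>k. g k (f k)) L (g i y st)"
  proof -
    fix f y
    show "fold (\<lambda>k. g k (if k = i then y else f k)) L (g i y st) = fold (\<lambda>k. g k (f k)) L (g i y st)"
      using Cons.prems(1) by (intro fold_cong) auto
  qed
  have sL: "set (i # L) - {i} = set L" using Cons.prems(1) by auto
  have IH: "\<And>y. measure_pmf.expectation (Pi_pmf A' False (\<lambda>_. bernoulli_pmf q))
           (\<lambda>c. \<Phi> (fold (\<lambda>k. g k (c k)) L (g i y st))) \<le> \<Phi> (g i y st)"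
  proof -
    fix y
    have "Inv (set L) (g i y st)" using inv[of i "set (i # L)" st y] Cons.prems(4) sL by auto
    then show "measure_pmf.expectation (Pi_pmf A' False (\<lambda>_. bernoulli_pmf q))
           (\<lambda>c. \<Phi> (fold (\<lambda>k. g k (c k)) L (g i y st))) \<le> \<Phi> (g i y st)"
      using Cons.IH[of A' "g i y st"] Cons.prems sub A by auto
  qed
  have "measure_pmf.expectation (Pi_pmf A False (\<lambda>_. bernoulli_pmf q))
           (\<lambda>c. \<Phi> (fold (\<lambda>k. g k (c k)) (i # L) st))
      = measure_pmf.expectation (bernoulli_pmf q \<bind> (\<lambda>y. map_pmf (\<lambda>f. f(i:=y)) (Pi_pmf A' False (\<lambda>_. bernoulli_pmf q))))
           (\<lambda>c. \<Phi> (fold (\<lambda>k. g k (c k)) (i # L) st))"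
    unfolding A(1) Pi_pmf_insert'[OF A(2,3)] map_pmf_def by simp
  also have "\<dots> = (\<Sum>y\<in>UNIV. pmf (bernoulli_pmf q) y *
        measure_pmf.expectation (Pi_pmf A' False (\<lambda>_. bernoulli_pmf q))
           (\<lambda>c. \<Phi> (fold (\<lambda>k. g k (c k)) L (g i y st))))"
    by (subst pmf_expectation_bind[of UNIV]) (use fin in \<open>auto simp: eq\<close>)
  also have "\<dots> = q * measure_pmf.expectation (Pi_pmf A' False (\<lambda>_. bernoulli_pmf q))
           (\<lambda>c. \<Phi> (fold (\<lambda>k. g k (c k)) L (g i True st))) +
      (1 - q) * measure_pmf.expectation (Pi_pmf A' False (\<lambda>_. bernoulli_pmf q))
           (\<lambda>c. \<Phi> (fold (\<lambda>k. g k (c k)) L (g i False st)))"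
    using q by (simp add: UNIV_bool)
  also have "\<dots> \<le> q * \<Phi> (g i True st) + (1 - q) * \<Phi> (g i False st)"
    using IH q by (intro add_mono mult_left_mono) auto
  also have "\<dots> \<le> \<Phi> st" using Cons.prems step[of i "set (i # L)" st] by auto
  finally show ?case .
qed


lemma val_set: "{fst t S' | S'. S' \<in> snd t \<and> S' \<subseteq> T} = fst t ` {S' \<in> snd t. S' \<subseteq> T}"
  by auto

lemma val_nonneg: "finite (snd t) \<Longrightarrow> 0 \<le> val t T"
  unfolding val_def val_set by (intro Max_ge) auto

lemma val_ge: "finite (snd t) \<Longrightarrow> S' \<in> snd t \<Longrightarrow> S' \<subseteq> T \<Longrightarrow> fst t S' \<le> val t T"
  unfolding val_def val_set by (intro Max_ge) auto

lemma val_cases: "finite (snd t) \<Longrightarrow> val t T = 0 \<or> (\<exists>S'\<in>snd t. S' \<subseteq> T \<and> val t T = fst t S')"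
proof -
  assume f: "finite (snd t)"
  have "val t T \<in> insert 0 (fst t ` {S' \<in> snd t. S' \<subseteq> T})"
    unfolding val_def val_set using f by (intro Max_in) auto
  then show ?thesis by auto
qed

lemma val_pos_ex: "finite (snd t) \<Longrightarrow> 0 < val t T \<Longrightarrow> \<exists>S'\<in>snd t. S' \<subseteq> T \<and> val t T = fst t S'"
  using val_cases[of t T] by auto

lemma val_mono: "finite (snd t) \<Longrightarrow> T \<subseteq> T' \<Longrightarrow> val t T \<le> val t T'"
proof -
  assume f: "finite (snd t)" and s: "T \<subseteq> T'"
  show ?thesis
  proof (cases "val t T = 0")
    case True then show ?thesis using val_nonneg[OF f] by simp
  next
    case False
    then obtain S' where "S' \<in> snd t" "S' \<subseteq> T" "val t T = fst t S'" using val_cases[OF f, of T] by auto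
    then show ?thesis using val_ge[OF f, of S' T'] s by auto
  qed
qed

lemma val_self: "finite (snd t) \<Longrightarrow> S \<in> snd t \<Longrightarrow> fst t S \<le> val t S"
  using val_ge by blast

lemma valid_fin: "valid_type U k t \<Longrightarrow> finite (snd t)"
  unfolding valid_type_def by auto

lemma valid_ne: "valid_type U k t \<Longrightarrow> 1 \<le> k \<Longrightarrow> snd t \<noteq> {}"
  unfolding valid_type_def by auto

lemma val_empty: "valid_type U k t \<Longrightarrow> val t {} = 0"
  using val_cases[of t "{}"] unfolding valid_type_def by auto

lemma vmax_ge: "finite (snd t) \<Longrightarrow> S \<in> snd t \<Longrightarrow> val t S \<le> vmax t"
  unfolding vmax_def by (intro Max_ge) auto

lemma vmax_in: "finite (snd t) \<Longrightarrow> snd t \<noteq> {} \<Longrightarrow> \<exists>S\<in>snd t. val t S = vmax t"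
proof -
  assume "finite (snd t)" "snd t \<noteq> {}"
  then have "vmax t \<in> val t ` snd t" unfolding vmax_def by (intro Max_in) auto
  then show ?thesis by auto
qed

lemma val_le_vmax: "finite (snd t) \<Longrightarrow> snd t \<noteq> {} \<Longrightarrow> val t T \<le> vmax t"
proof -
  assume f: "finite (snd t)" and ne: "snd t \<noteq> {}"
  then obtain S0 where S0: "S0 \<in> snd t" by auto
  show ?thesis
  proof (cases "val t T = 0")
    case True
    then show ?thesis using val_nonneg[OF f, of S0] vmax_ge[OF f S0] by auto
  next
    case False
    then obtain S' where "S' \<in> snd t" "val t T = fst t S'" using val_cases[OF f, of T] by auto
    then show ?thesis using val_self[OF f, of S'] vmax_ge[OF f, of S'] by linarith
  qed
qed

lemma vmax_nonneg: "finite (snd t) \<Longrightarrow> snd t \<noteq> {} \<Longrightarrow> 0 \<le> vmax t"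
  using val_le_vmax val_nonneg order_trans by blast

lemma winner_props:
  assumes "1 \<le> n"
  shows "winner n D < n \<and> (\<forall>i<n. vmax (D i) \<le> vmax (D (winner n D)))"
proof -
  have "0 \<in> {..<n}" using assms by auto
  then have "finite (vmax ` D ` {..<n})" "vmax ` D ` {..<n} \<noteq> {}" by auto
  then have "Max (vmax ` D ` {..<n}) \<in> vmax ` D ` {..<n}" by (rule Max_in)
  then obtain j where j: "j < n" "vmax (D j) = Max (vmax ` D ` {..<n})" by auto
  have "\<forall>i<n. vmax (D i) \<le> vmax (D j)" unfolding j(2) by auto
  with j have "\<exists>j. j < n \<and> (\<forall>i<n. vmax (D i) \<le> vmax (D j))" by blast
  then show ?thesis unfolding winner_def by (rule LeastI_ex)
qed

lemma winner_least:
  "l < n \<Longrightarrow> (\<forall>i<n. vmax (D i) \<le> vmax (D l)) \<Longrightarrow> winner n D \<le> l"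
  unfolding winner_def by (rule Least_le) auto

lemma choose_props:
  fixes t p Ui
  assumes f: "finite (snd t)"
  defines "X \<equiv> choose_set t p Ui"
  shows "X \<subseteq> Ui" "X = {} \<or> (X \<in> snd t \<and> sum p X \<le> val t X)"
    "\<And>S'. S' \<in> snd t \<Longrightarrow> S' \<subseteq> Ui \<Longrightarrow> sum p S' \<le> val t S' \<Longrightarrow> val t S' \<le> val t X"
proof -
  define C where "C = {S \<in> snd t. S \<subseteq> Ui \<and> (\<Sum>e\<in>S. p e) \<le> val t S}"
  have fC: "finite C" using f unfolding C_def by auto
  have X: "X = (if C = {} then {} else (SOME S. S \<in> C \<and> (\<forall>S'\<in>C. val t S' \<le> val t S)))"
    unfolding X_def choose_set_def C_def Let_def by simp
  have ex: "C \<noteq> {} \<Longrightarrow> \<exists>S. S \<in> C \<and> (\<forall>S'\<in>C. val t S' \<le> val t S)"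
  proof -
    assume ne: "C \<noteq> {}"
    have "Max (val t ` C) \<in> val t ` C" using fC ne by (intro Max_in) auto
    then obtain S where "S \<in> C" "val t S = Max (val t ` C)" by auto
    then show ?thesis using fC by auto
  qed
  have main: "C \<noteq> {} \<Longrightarrow> X \<in> C \<and> (\<forall>S'\<in>C. val t S' \<le> val t X)"
  proof -
    assume "C \<noteq> {}"
    then have "X = (SOME S. S \<in> C \<and> (\<forall>S'\<in>C. val t S' \<le> val t S))" using X by simp
    then show ?thesis using someI_ex[OF ex[OF \<open>C \<noteq> {}\<close>]] by simp
  qed
  have memC: "\<And>S. S \<in> C \<Longrightarrow> S \<in> snd t \<and> S \<subseteq> Ui \<and> sum p S \<le> val t S" unfolding C_def by auto
  show "X \<subseteq> Ui"
  proof (cases "C = {}")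
    case True then show ?thesis using X by simp
  next
    case False then show ?thesis using main memC by blast
  qed
  show "X = {} \<or> (X \<in> snd t \<and> sum p X \<le> val t X)"
  proof (cases "C = {}")
    case True then show ?thesis using X by simp
  next
    case False then show ?thesis using main memC by blast
  qed
  fix S' assume "S' \<in> snd t" "S' \<subseteq> Ui" "sum p S' \<le> val t S'"
  then have "S' \<in> C" unfolding C_def by auto
  then show "val t S' \<le> val t X" using main by auto
qed


type_synonym ast = "(nat \<Rightarrow> real) \<times> (nat \<Rightarrow> nat) \<times> (nat \<Rightarrow> nat set) \<times> (nat \<Rightarrow> nat set) \<times> (nat \<Rightarrow> nat)"

definition pr :: "ast \<Rightarrow> nat \<Rightarrow> real" where "pr st = fst st"
definition su :: "ast \<Rightarrow> nat \<Rightarrow> nat" where "su st = fst (snd st)"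
definition Ra :: "ast \<Rightarrow> nat \<Rightarrow> nat set" where "Ra st = fst (snd (snd st))"
definition Tn :: "ast \<Rightarrow> nat \<Rightarrow> nat set" where "Tn st = fst (snd (snd (snd st)))"
definition tc :: "ast \<Rightarrow> nat \<Rightarrow> nat" where "tc st = snd (snd (snd (snd st)))"

definition sel :: "nat set \<Rightarrow> (nat \<Rightarrow> decl) \<Rightarrow> nat \<Rightarrow> ast \<Rightarrow> nat set" where
  "sel U D i st = choose_set (D i) (pr st) {e \<in> U. 0 < su st e}"

definition astep :: "nat set \<Rightarrow> real \<Rightarrow> nat \<Rightarrow> (nat \<Rightarrow> decl) \<Rightarrow> bool \<Rightarrow> nat \<Rightarrow> ast \<Rightarrow> ast" where
  "astep U r j D y i st =
    (let S = sel U D i st; Ri = (if i = j \<or> y then S else {}) in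
     (\<lambda>e. if e \<in> S then r * pr st e else pr st e,
      \<lambda>e. if e \<in> Ri then su st e - 1 else su st e,
      (Ra st)(i := Ri), (Tn st)(i := S),
      \<lambda>e. if e \<in> S then Suc (tc st e) else tc st e))"

lemma astep_acc:
  "pr (astep U r j D y i st) = (\<lambda>e. if e \<in> sel U D i st then r * pr st e else pr st e)"
  "su (astep U r j D y i st) = (\<lambda>e. if e \<in> (if i = j \<or> y then sel U D i st else {}) then su st e - 1 else su st e)"
  "Ra (astep U r j D y i st) = (Ra st)(i := (if i = j \<or> y then sel U D i st else {}))"
  "Tn (astep U r j D y i st) = (Tn st)(i := sel U D i st)"
  "tc (astep U r j D y i st) = (\<lambda>e. if e \<in> sel U D i st then Suc (tc st e) else tc st e)"
  unfolding astep_def pr_def su_def Ra_def Tn_def tc_def Let_def by simp_all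

definition afold :: "nat set \<Rightarrow> real \<Rightarrow> nat \<Rightarrow> (nat \<Rightarrow> decl) \<Rightarrow> (nat \<Rightarrow> bool) \<Rightarrow> nat list \<Rightarrow> ast \<Rightarrow> ast" where
  "afold U r j D c L st = fold (\<lambda>i. astep U r j D (c i) i) L st"

lemma afold_Nil[simp]: "afold U r j D c [] st = st" unfolding afold_def by simp
lemma afold_Cons[simp]: "afold U r j D c (i # L) st = afold U r j D c L (astep U r j D (c i) i st)"
  unfolding afold_def by simp
lemma afold_append: "afold U r j D c (L1 @ L2) st = afold U r j D c L2 (afold U r j D c L1 st)"
  unfolding afold_def by simp

lemma afold_proj:
  "(pr (afold U r j D c L st), su (afold U r j D c L st), Ra (afold U r j D c L st))
   = fold (mpu_step U r j D c) L (pr st, su st, Ra st)"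
proof (induction L arbitrary: st)
  case Nil then show ?case by simp
next
  case (Cons i L)
  have "mpu_step U r j D c i (pr st, su st, Ra st) =
        (pr (astep U r j D (c i) i st), su (astep U r j D (c i) i st), Ra (astep U r j D (c i) i st))"
    unfolding mpu_step_def astep_acc sel_def Let_def by simp
  then show ?case using Cons.IH[of "astep U r j D (c i) i st"] by simp
qed

definition ordr :: "nat \<Rightarrow> nat \<Rightarrow> nat list" where
  "ordr n j = j # filter (\<lambda>i. i \<noteq> j) [0..<n]"

lemma ordr_set: "j < n \<Longrightarrow> set (ordr n j) = {..<n}" unfolding ordr_def by auto
lemma ordr_distinct: "distinct (ordr n j)" unfolding ordr_def by auto

definition st0 :: "real \<Rightarrow> nat \<Rightarrow> ast" where
  "st0 p0 b = (\<lambda>_. p0, \<lambda>_. b, \<lambda>_. {}, \<lambda>_. {}, \<lambda>_. 0)"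

lemma st0_acc[simp]: "pr (st0 p0 b) = (\<lambda>_. p0)" "su (st0 p0 b) = (\<lambda>_. b)" "Ra (st0 p0 b) = (\<lambda>_. {})"
  "Tn (st0 p0 b) = (\<lambda>_. {})" "tc (st0 p0 b) = (\<lambda>_. 0)"
  unfolding st0_def pr_def su_def Ra_def Tn_def tc_def by simp_all

definition p0f :: "nat set \<Rightarrow> nat \<Rightarrow> nat \<Rightarrow> real \<Rightarrow> (nat \<Rightarrow> decl) \<Rightarrow> real" where
  "p0f U n b eps D = (1 + eps) * vmax (D (winner n D)) / (4 * real b * real (card U))"

definition rr :: "nat \<Rightarrow> real" where "rr b = 2 powr (1 / real b)"

definition fin :: "nat set \<Rightarrow> nat \<Rightarrow> nat \<Rightarrow> real \<Rightarrow> (nat \<Rightarrow> decl) \<Rightarrow> (nat \<Rightarrow> bool) \<Rightarrow> ast" where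
  "fin U n b eps D c = afold U (rr b) (winner n D) D c (ordr n (winner n D)) (st0 (p0f U n b eps D) b)"

lemma alloc_eq: "mpu_alloc U n b eps D c = Ra (fin U n b eps D c)"
proof -
  have "fold (mpu_step U (rr b) (winner n D) D c) (ordr n (winner n D))
          (\<lambda>_. p0f U n b eps D, \<lambda>_. b, \<lambda>_. {})
      = (pr (fin U n b eps D c), su (fin U n b eps D c), Ra (fin U n b eps D c))"
    unfolding fin_def afold_proj by simp
  then show ?thesis unfolding mpu_alloc_def Let_def p0f_def rr_def ordr_def by simp
qed

lemma fold_inv:
  assumes "\<And>i P st. i \<in> set L \<Longrightarrow> i \<notin> P \<Longrightarrow> I P st \<Longrightarrow> I (insert i P) (f i st)"
    "distinct L" "set L \<inter> P0 = {}" "I P0 st"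
  shows "I (P0 \<union> set L) (fold f L st)"
  using assms
proof (induction L arbitrary: P0 st)
  case Nil then show ?case by simp
next
  case (Cons i L)
  have "I (insert i P0) (f i st)" using Cons.prems by auto
  then have "I (insert i P0 \<union> set L) (fold f L (f i st))"
    using Cons.IH[of "insert i P0" "f i st"] Cons.prems by auto
  then show ?case by simp
qed

lemma Ra_other: "i \<notin> set L \<Longrightarrow> Ra (afold U r j D c L st) i = Ra st i"
proof (induction L arbitrary: st)
  case Nil then show ?case by simp
next
  case (Cons k L) then show ?case by (simp add: astep_acc)
qed

lemma Tn_other: "i \<notin> set L \<Longrightarrow> Tn (afold U r j D c L st) i = Tn st i"
proof (induction L arbitrary: st)
  case Nil then show ?case by simp
next
  case (Cons k L) then show ?case by (simp add: astep_acc)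
qed


lemma sel_sub: "finite (snd (D i)) \<Longrightarrow> sel U D i st \<subseteq> {e \<in> U. 0 < su st e}"
  unfolding sel_def using choose_props(1) by blast

lemma feas_step:
  fixes U r j D y i st
  assumes fin: "finite (snd (D i))" and I: "finite P" "i \<notin> P" "\<forall>l. l \<notin> P \<longrightarrow> Ra st l = {}"
    "\<forall>l. Ra st l \<subseteq> U" "\<forall>e\<in>U. su st e + card {l \<in> P. e \<in> Ra st l} = b"
  defines "st' \<equiv> astep U r j D y i st"
  shows "finite (insert i P) \<and> (\<forall>l. l \<notin> insert i P \<longrightarrow> Ra st' l = {}) \<and> (\<forall>l. Ra st' l \<subseteq> U) \<and>
     (\<forall>e\<in>U. su st' e + card {l \<in> insert i P. e \<in> Ra st' l} = b)"
proof -
  define S where "S = sel U D i st"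
  define Ri where "Ri = (if i = j \<or> y then S else {})"
  have RiS: "Ri \<subseteq> {e \<in> U. 0 < su st e}" using sel_sub[of D i U st, OF fin] unfolding Ri_def S_def by auto
  have Ra': "Ra st' = (Ra st)(i := Ri)" unfolding st'_def astep_acc Ri_def S_def by simp
  have su': "su st' = (\<lambda>e. if e \<in> Ri then su st e - 1 else su st e)" unfolding st'_def astep_acc Ri_def S_def by simp
  have c: "\<forall>e\<in>U. su st' e + card {l \<in> insert i P. e \<in> Ra st' l} = b"
  proof
    fix e assume e: "e \<in> U"
    have eqP: "{l \<in> P. e \<in> Ra st' l} = {l \<in> P. e \<in> Ra st l}" using I(2) unfolding Ra' by auto
    show "su st' e + card {l \<in> insert i P. e \<in> Ra st' l} = b"
    proof (cases "e \<in> Ri")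
      case True
      have "{l \<in> insert i P. e \<in> Ra st' l} = insert i {l \<in> P. e \<in> Ra st l}" using True eqP unfolding Ra' by auto
      then have "card {l \<in> insert i P. e \<in> Ra st' l} = Suc (card {l \<in> P. e \<in> Ra st l})" using I(1,2) by simp
      moreover have "0 < su st e" using True RiS by auto
      ultimately show ?thesis using I(5) e True unfolding su' by auto
    next
      case False
      have "{l \<in> insert i P. e \<in> Ra st' l} = {l \<in> P. e \<in> Ra st l}" using False eqP I(2) unfolding Ra' by auto
      then show ?thesis using I(5) e False unfolding su' by auto
    qed
  qed
  show ?thesis using I RiS c unfolding Ra' by auto
qed

lemma feas_main:
  assumes "finite U" "1 \<le> n" "\<forall>i<n. valid_type U k (D i)"
  shows "feasible U n b (Ra (fin U n b eps D c))"
proof -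
  define j where "j = winner n D"
  have j: "j < n" using winner_props[OF assms(2)] unfolding j_def by auto
  define I where "I = (\<lambda>P st. finite P \<and> (\<forall>l. l \<notin> P \<longrightarrow> Ra st l = {}) \<and> (\<forall>l. Ra st l \<subseteq> U) \<and>
     (\<forall>e\<in>U. su st e + card {l \<in> P. e \<in> Ra st l} = b))"
  have "I ({} \<union> set (ordr n j)) (fold (\<lambda>i. astep U (rr b) j D (c i) i) (ordr n j) (st0 (p0f U n b eps D) b))"
  proof (rule fold_inv[where I = I])
    fix i P st assume "i \<in> set (ordr n j)" "i \<notin> P" "I P st"
    then have "i < n" using ordr_set[OF j] by auto
    then have "finite (snd (D i))" using assms(3) by (meson valid_fin)
    have "I P st" by fact
    then show "I (insert i P) (astep U (rr b) j D (c i) i st)"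
      unfolding I_def
      using feas_step[of D i P st U b "rr b" j "c i"] \<open>i \<notin> P\<close> \<open>finite (snd (D i))\<close> by simp
  next
    show "distinct (ordr n j)" by (rule ordr_distinct)
    show "set (ordr n j) \<inter> {} = {}" by simp
    show "I {} (st0 (p0f U n b eps D) b)" unfolding I_def by simp
  qed
  then have "I {..<n} (fin U n b eps D c)" unfolding fin_def afold_def j_def[symmetric] ordr_set[OF j] by simp
  then have a: "\<forall>l. Ra (fin U n b eps D c) l \<subseteq> U"
    and b: "\<forall>e\<in>U. su (fin U n b eps D c) e + card {l \<in> {..<n}. e \<in> Ra (fin U n b eps D c) l} = b"
    unfolding I_def by auto
  have "\<forall>e\<in>U. card {l \<in> {..<n}. e \<in> Ra (fin U n b eps D c) l} \<le> b"
  proof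
    fix e assume "e \<in> U"
    then show "card {l \<in> {..<n}. e \<in> Ra (fin U n b eps D c) l} \<le> b" using b by force
  qed
  then show ?thesis using a unfolding feasible_def by auto
qed


lemma truth_core:
  assumes ft: "finite (snd t)" and fb: "finite (snd bi)" and fU: "finite Ui"
    and p: "\<forall>e. 0 \<le> p e"
    and ver: "val bi (choose_set bi p Ui) \<le> val t (choose_set bi p Ui)"
  shows "val t (choose_set bi p Ui) \<le> val t (choose_set t p Ui)"
proof -
  define X where "X = choose_set bi p Ui"
  have XU: "X \<subseteq> Ui" using choose_props(1)[OF fb] unfolding X_def by blast
  have sX: "sum p X \<le> val bi X"
    using choose_props(2)[OF fb, of p Ui] val_nonneg[OF fb, of "{}"] unfolding X_def by auto
  show ?thesis
  proof (cases "val t X = 0")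
    case True then show ?thesis using val_nonneg[OF ft] unfolding X_def by simp
  next
    case False
    then obtain T where T: "T \<in> snd t" "T \<subseteq> X" "val t X = fst t T" using val_cases[OF ft, of X] by auto
    have "sum p T \<le> sum p X" using T(2) XU fU p by (intro sum_mono2) (auto intro: finite_subset)
    also have "\<dots> \<le> val t X" using sX ver unfolding X_def by simp
    also have "\<dots> \<le> val t T" using T(3) val_self[OF ft T(1)] by simp
    finally have "val t T \<le> val t (choose_set t p Ui)" using choose_props(3)[OF ft T(1)] T(2) XU by auto
    then show ?thesis using T(3) val_self[OF ft T(1)] unfolding X_def by simp
  qed
qed

lemma astep_cong: "D1 i = D2 i \<Longrightarrow> astep U r j D1 y i st = astep U r j D2 y i st"
  unfolding astep_def sel_def by simp

lemma afold_cong: "\<forall>k\<in>set L. D1 k = D2 k \<Longrightarrow> afold U r j D1 c L st = afold U r j D2 c L st"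
proof (induction L arbitrary: st)
  case Nil then show ?case by simp
next
  case (Cons i L) then show ?case using astep_cong[of D1 i D2] by simp
qed

lemma pr_nonneg: "0 \<le> r \<Longrightarrow> \<forall>e. 0 \<le> pr st e \<Longrightarrow> \<forall>e. 0 \<le> pr (afold U r j D c L st) e"
proof (induction L arbitrary: st)
  case Nil then show ?case by simp
next
  case (Cons i L)
  have "\<forall>e. 0 \<le> pr (astep U r j D (c i) i st) e" using Cons.prems by (simp add: astep_acc)
  then show ?case using Cons by simp
qed

lemma winner_eq:
  assumes n: "1 \<le> n" and ag: "\<forall>l. l \<noteq> i \<longrightarrow> D1 l = D2 l"
    and w1: "winner n D1 \<noteq> i" and w2: "winner n D2 \<noteq> i"
  shows "winner n D1 = winner n D2"
proof -
  define a where "a = winner n D1"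
  define a' where "a' = winner n D2"
  have A: "a < n" "\<forall>l<n. vmax (D1 l) \<le> vmax (D1 a)" using winner_props[OF n, of D1] unfolding a_def by auto
  have A': "a' < n" "\<forall>l<n. vmax (D2 l) \<le> vmax (D2 a')" using winner_props[OF n, of D2] unfolding a'_def by auto
  have "\<forall>l<n. vmax (D2 l) \<le> vmax (D2 a)"
  proof (intro allI impI)
    fix l assume l: "l < n"
    show "vmax (D2 l) \<le> vmax (D2 a)"
    proof (cases "l = i")
      case True
      have "vmax (D2 l) \<le> vmax (D2 a')" using A' l by auto
      also have "\<dots> = vmax (D1 a')" using ag w2 unfolding a'_def by auto
      also have "\<dots> \<le> vmax (D1 a)" using A A' by auto
      also have "\<dots> = vmax (D2 a)" using ag w1 unfolding a_def by auto
      finally show ?thesis .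
    next
      case False
      then show ?thesis using A l ag w1 unfolding a_def by auto
    qed
  qed
  then have "a' \<le> a" unfolding a'_def using winner_least A(1) by blast
  have "\<forall>l<n. vmax (D1 l) \<le> vmax (D1 a')"
  proof (intro allI impI)
    fix l assume l: "l < n"
    show "vmax (D1 l) \<le> vmax (D1 a')"
    proof (cases "l = i")
      case True
      have "vmax (D1 l) \<le> vmax (D1 a)" using A l by auto
      also have "\<dots> = vmax (D2 a)" using ag w1 unfolding a_def by auto
      also have "\<dots> \<le> vmax (D2 a')" using A A' by auto
      also have "\<dots> = vmax (D1 a')" using ag w2 unfolding a'_def by auto
      finally show ?thesis .
    next
      case False
      then show ?thesis using A' l ag w2 unfolding a'_def by auto
    qed
  qed
  then have "a \<le> a'" unfolding a_def using winner_least A'(1) by blast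
  then show ?thesis using \<open>a' \<le> a\<close> unfolding a_def a'_def by simp
qed

lemma ordr_split:
  assumes "i < n" "i \<noteq> j"
  shows "\<exists>pre post. ordr n j = pre @ i # post \<and> i \<notin> set pre \<and> i \<notin> set post \<and> j \<in> set pre"
proof -
  have "i \<in> set (filter (\<lambda>i. i \<noteq> j) [0..<n])" using assms by auto
  then obtain pre post where pp: "filter (\<lambda>i. i \<noteq> j) [0..<n] = pre @ i # post" by (meson split_list)
  have "distinct (pre @ i # post)" using pp[symmetric] by (metis distinct_filter distinct_upt)
  then have "ordr n j = (j # pre) @ i # post \<and> i \<notin> set (j # pre) \<and> i \<notin> set post \<and> j \<in> set (j # pre)"
    unfolding ordr_def using pp assms(2) by auto
  then show ?thesis by blast
qed

lemma alloc_nonfirst: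
  assumes "i < n" "i \<noteq> winner n D"
  shows "\<exists>pre. (\<forall>k\<in>set pre. k \<noteq> i) \<and> Ra (fin U n b eps D c) i =
     (if c i then choose_set (D i) (pr (afold U (rr b) (winner n D) D c pre (st0 (p0f U n b eps D) b)))
        {e \<in> U. 0 < su (afold U (rr b) (winner n D) D c pre (st0 (p0f U n b eps D) b)) e} else {})
     \<and> set pre \<subseteq> set (ordr n (winner n D))"
proof -
  obtain pre post where pp: "ordr n (winner n D) = pre @ i # post" "i \<notin> set pre" "i \<notin> set post"
    using ordr_split[OF assms] by blast
  have "Ra (fin U n b eps D c) i = Ra (astep U (rr b) (winner n D) D (c i) i
           (afold U (rr b) (winner n D) D c pre (st0 (p0f U n b eps D) b))) i"
    unfolding fin_def pp(1) afold_append afold_Cons using Ra_other[OF pp(3)] by simp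
  then show ?thesis using pp assms(2) by (auto simp: astep_acc sel_def)
qed

lemma alloc_first:
  assumes "1 \<le> n"
  shows "Ra (fin U n b eps D c) (winner n D) = choose_set (D (winner n D)) (\<lambda>_. p0f U n b eps D) {e \<in> U. 0 < b}"
proof -
  have "winner n D \<notin> set (filter (\<lambda>i. i \<noteq> winner n D) [0..<n])" by auto
  then show ?thesis unfolding fin_def ordr_def afold_Cons
    using Ra_other by (simp add: astep_acc sel_def)
qed

lemma first_val:
  assumes U: "finite U" and n: "1 \<le> n" and b: "1 \<le> b" and eps: "0 < eps" "eps < 1"
    and v: "valid_type U k (D (winner n D))" "1 \<le> k"
  shows "val (D (winner n D)) (Ra (fin U n b eps D c) (winner n D)) = vmax (D (winner n D))"
proof -
  define t where "t = D (winner n D)"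
  define p0 where "p0 = p0f U n b eps D"
  have ft: "finite (snd t)" and ne: "snd t \<noteq> {}" using v valid_fin valid_ne unfolding t_def by auto
  obtain S where S: "S \<in> snd t" "val t S = vmax t" using vmax_in[OF ft ne] by auto
  have SU: "S \<subseteq> U" using v S(1) unfolding valid_type_def t_def by auto
  have vm: "0 \<le> vmax t" using vmax_nonneg[OF ft ne] .
  have Upos: "0 < card U" using SU S(1) v U unfolding valid_type_def t_def
    by (metis card_gt_0_iff finite_subset subset_empty)
  have p0: "p0 = (1 + eps) * vmax t / (4 * real b * real (card U))" unfolding p0_def p0f_def t_def by simp
  have p0n: "0 \<le> p0" unfolding p0 using vm eps b by auto
  have "sum (\<lambda>_. p0) S = real (card S) * p0" by simp
  also have "\<dots> \<le> real (card U) * p0" using card_mono[OF U SU] p0n by (intro mult_right_mono) auto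
  also have "\<dots> = (1 + eps) * vmax t / (4 * real b)" unfolding p0 using Upos b by (simp add: field_simps)
  also have "\<dots> \<le> vmax t"
  proof -
    have "(1 + eps) \<le> 4 * real b" using eps b by auto
    then have "(1 + eps) * vmax t \<le> (4 * real b) * vmax t" using vm by (intro mult_right_mono) auto
    then show ?thesis using b by (simp add: field_simps)
  qed
  finally have "sum (\<lambda>_. p0) S \<le> val t S" using S(2) by simp
  moreover have "S \<subseteq> {e \<in> U. 0 < b}" using SU b by auto
  ultimately have "val t S \<le> val t (choose_set t (\<lambda>_. p0) {e \<in> U. 0 < b})"
    using choose_props(3)[OF ft S(1)] by auto
  moreover have "val t (choose_set t (\<lambda>_. p0) {e \<in> U. 0 < b}) \<le> vmax t" using val_le_vmax[OF ft ne] .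
  ultimately show ?thesis using alloc_first[OF n] S(2) unfolding t_def p0_def by simp
qed


lemma alloc_at:
  assumes "ordr n (winner n D) = pre @ i # post" "i \<notin> set post" "i \<noteq> winner n D"
  shows "Ra (fin U n b eps D c) i =
     (if c i then choose_set (D i) (pr (afold U (rr b) (winner n D) D c pre (st0 (p0f U n b eps D) b)))
        {e \<in> U. 0 < su (afold U (rr b) (winner n D) D c pre (st0 (p0f U n b eps D) b)) e} else {})"
proof -
  have "Ra (fin U n b eps D c) i = Ra (astep U (rr b) (winner n D) D (c i) i
           (afold U (rr b) (winner n D) D c pre (st0 (p0f U n b eps D) b))) i"
    unfolding fin_def assms(1) afold_append afold_Cons using Ra_other[OF assms(2)] by simp
  then show ?thesis using assms(3) by (auto simp: astep_acc sel_def)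
qed

lemma rr_pos: "0 < rr b" unfolding rr_def by simp

lemma truthful_main:
  assumes U: "finite U" "U \<noteq> {}" and n: "1 \<le> n" and b: "1 \<le> b" and k: "1 \<le> k" and eps: "0 < eps" "eps < 1"
  shows "truthful_verif U n k (\<lambda>decl. mpu_alloc U n b eps decl c)"
  unfolding truthful_verif_def alloc_eq
proof (intro allI impI)
  fix decl i t bi
  assume vd: "\<forall>l<n. valid_type U k (decl l)" and i: "i < n" and vt: "valid_type U k t"
    and vb: "valid_type U k bi"
    and ver: "val bi (Ra (fin U n b eps (decl(i := bi)) c) i) \<le> val t (Ra (fin U n b eps (decl(i := bi)) c) i)"
  define D1 where "D1 = decl(i := bi)"
  define D2 where "D2 = decl(i := t)"
  define A1 where "A1 = Ra (fin U n b eps D1 c) i"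
  define A2 where "A2 = Ra (fin U n b eps D2 c) i"
  have ver': "val bi A1 \<le> val t A1" using ver unfolding A1_def D1_def .
  have v1: "\<forall>l<n. valid_type U k (D1 l)" using vd vb unfolding D1_def by auto
  have v2: "\<forall>l<n. valid_type U k (D2 l)" using vd vt unfolding D2_def by auto
  have ft: "finite (snd t)" "snd t \<noteq> {}" using vt k valid_fin valid_ne by auto
  have fb: "finite (snd bi)" "snd bi \<noteq> {}" using vb k valid_fin valid_ne by auto
  have W1: "winner n D1 < n" "\<forall>l<n. vmax (D1 l) \<le> vmax (D1 (winner n D1))" using winner_props[OF n] by auto
  have W2: "winner n D2 < n" "\<forall>l<n. vmax (D2 l) \<le> vmax (D2 (winner n D2))" using winner_props[OF n] by auto
  show "val t A1 \<le> val t A2"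
  proof (cases "winner n D2 = i")
    case True
    have "val t A2 = vmax t"
      using first_val[OF U(1) n b eps, of k D2 c] True v2 i k unfolding A2_def D2_def by auto
    then show ?thesis using val_le_vmax[OF ft] by simp
  next
    case w2: False
    show ?thesis
    proof (cases "winner n D1 = i")
      case True
      have "val bi A1 = vmax bi"
        using first_val[OF U(1) n b eps, of k D1 c] True v1 i k unfolding A1_def D1_def by auto
      then have vbt: "vmax bi \<le> vmax t" using ver' val_le_vmax[OF ft, of A1] by simp
      have "\<forall>l<n. vmax (D2 l) \<le> vmax (D2 i)"
      proof (intro allI impI)
        fix l assume l: "l < n"
        show "vmax (D2 l) \<le> vmax (D2 i)"
        proof (cases "l = i")
          case False
          then have "vmax (D2 l) = vmax (D1 l)" unfolding D1_def D2_def by simp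
          also have "\<dots> \<le> vmax (D1 i)" using W1 True l by auto
          also have "\<dots> \<le> vmax (D2 i)" using vbt unfolding D1_def D2_def by simp
          finally show ?thesis .
        qed simp
      qed
      then have le1: "winner n D2 \<le> i" using winner_least i by blast
      have "\<forall>l<n. vmax (D1 l) \<le> vmax (D1 (winner n D2))"
      proof (intro allI impI)
        fix l assume l: "l < n"
        show "vmax (D1 l) \<le> vmax (D1 (winner n D2))"
        proof (cases "l = i")
          case True
          have "vmax (D1 l) \<le> vmax (D2 i)" using vbt True unfolding D1_def D2_def by simp
          also have "\<dots> \<le> vmax (D2 (winner n D2))" using W2 i by auto
          also have "\<dots> = vmax (D1 (winner n D2))" using w2 unfolding D1_def D2_def by simp
          finally show ?thesis .
        next
          case False
          then have "vmax (D1 l) = vmax (D2 l)" unfolding D1_def D2_def by simp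
          also have "\<dots> \<le> vmax (D2 (winner n D2))" using W2 l by auto
          also have "\<dots> = vmax (D1 (winner n D2))" using w2 unfolding D1_def D2_def by simp
          finally show ?thesis .
        qed
      qed
      then have "i \<le> winner n D2" using winner_least W2(1) True by metis
      then show ?thesis using le1 w2 by simp
    next
      case w1: False
      have ag: "\<forall>l. l \<noteq> i \<longrightarrow> D1 l = D2 l" unfolding D1_def D2_def by simp
      have jj: "winner n D1 = winner n D2" using winner_eq[OF n ag w1 w2] .
      define j where "j = winner n D1"
      obtain pre post where pp: "ordr n j = pre @ i # post" "i \<notin> set pre" "i \<notin> set post"
        using ordr_split[OF i, of j] w1 unfolding j_def by metis
      have p0eq: "p0f U n b eps D1 = p0f U n b eps D2"
        unfolding p0f_def jj[symmetric] using ag w1 by simp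
      define X where "X = afold U (rr b) j D1 c pre (st0 (p0f U n b eps D1) b)"
      have X2: "X = afold U (rr b) j D2 c pre (st0 (p0f U n b eps D2) b)"
        unfolding X_def p0eq using ag pp(2) by (intro afold_cong) auto
      have A1e: "A1 = (if c i then choose_set bi (pr X) {e \<in> U. 0 < su X e} else {})"
        using alloc_at[of n D1 pre i post U b eps c] pp w1 unfolding A1_def X_def j_def
        by (simp add: D1_def)
      have A2e: "A2 = (if c i then choose_set t (pr X) {e \<in> U. 0 < su X e} else {})"
        using alloc_at[of n D2 pre i post U b eps c] pp w2 unfolding A2_def X2 j_def jj
        by (simp add: D2_def)
      have vj: "valid_type U k (D1 j)" using v1 W1 unfolding j_def by auto
      have "0 \<le> vmax (D1 j)" using vmax_nonneg vj k valid_fin valid_ne by blast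
      then have "0 \<le> p0f U n b eps D1" unfolding p0f_def j_def using eps by simp
      then have pn: "\<forall>e. 0 \<le> pr X e" unfolding X_def using rr_pos
        by (intro pr_nonneg) (auto simp: less_imp_le)
      show ?thesis
      proof (cases "c i")
        case False then show ?thesis using A1e A2e by simp
      next
        case True
        then show ?thesis using truth_core[OF ft(1) fb(1) _ pn, of "{e \<in> U. 0 < su X e}"] ver' A1e A2e U(1) by simp
      qed
    qed
  qed
qed


lemma pow_fact_exp: "real n ^ n / fact n \<le> exp (real n)"
proof -
  have s: "(\<lambda>k. real n ^ k /\<^sub>R fact k) sums exp (real n)" by (rule exp_converges)
  have "sum (\<lambda>k. real n ^ k /\<^sub>R fact k) {n} \<le> suminf (\<lambda>k. real n ^ k /\<^sub>R fact k)"
    using s by (intro sum_le_suminf) (auto simp: sums_summable)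
  then show ?thesis using sums_unique[OF s] by (simp add: divide_inverse mult.commute)
qed

lemma choose_le: "real (N choose c) \<le> real N ^ c / fact c"
proof -
  have "real ((N choose c) * fact c) \<le> real (N ^ c)" using binomial_fact_pow[of N c] by linarith
  then have "real (N choose c) * fact c \<le> real N ^ c" by (simp add: of_nat_fact)
  then show ?thesis by (simp add: field_simps)
qed

lemma lin_geo: "(real c + 1) * (3/4) ^ c \<le> (3::real)"
proof -
  have "1 + real c * (1/3) \<le> (1 + 1/3::real) ^ c" by (rule Bernoulli_inequality) simp
  then have "real c + 1 \<le> 3 * (4/3::real) ^ c" by simp
  then have "(real c + 1) * (3/4) ^ c \<le> 3 * (4/3::real) ^ c * (3/4) ^ c" by (intro mult_right_mono) auto
  also have "\<dots> = 3" by (simp add: power_mult_distrib[symmetric])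
  finally show ?thesis .
qed

lemma numeric0:
  fixes D Lr q :: real and b d K :: nat
  assumes b: "1 \<le> b" and Dd: "D ^ b = real d" and D: "1 \<le> D" and Lr: "0 < Lr"
    and q: "q = 1 / (2 * exp 1 * D * Lr)" and K: "real K \<le> 3/2 * real b * Lr"
  shows "real d * real (K choose b) * q ^ b \<le> 3/4"
proof -
  have qn: "0 \<le> q" unfolding q using D Lr by auto
  define y where "y = real K * q"
  have y0: "0 \<le> y" unfolding y_def using qn by auto
  have y: "y \<le> 3 * real b / (4 * exp 1 * D)"
  proof -
    have "y \<le> 3/2 * real b * Lr * q" unfolding y_def using K qn by (intro mult_right_mono) auto
    also have "\<dots> = 3 * real b / (4 * exp 1 * D)" unfolding q using Lr D by (simp add: field_simps)
    finally show ?thesis .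
  qed
  have "real (K choose b) * q ^ b \<le> real K ^ b / fact b * q ^ b"
    using choose_le qn by (intro mult_right_mono) auto
  also have "\<dots> = y ^ b / fact b" unfolding y_def by (simp add: power_mult_distrib)
  also have "\<dots> \<le> (3 * real b / (4 * exp 1 * D)) ^ b / fact b"
    using y y0 by (intro divide_right_mono power_mono) auto
  also have "\<dots> = (3/4) ^ b * (real b ^ b / fact b) / (exp 1 ^ b * D ^ b)"
    by (simp add: power_divide power_mult_distrib field_simps)
  also have "\<dots> \<le> (3/4) ^ b * exp (real b) / (exp 1 ^ b * D ^ b)"
    using pow_fact_exp[of b] D by (intro divide_right_mono mult_left_mono) auto
  also have "\<dots> = (3/4) ^ b / real d"
    using Dd by (simp add: exp_of_nat_mult[symmetric])
  finally have a: "real (K choose b) * q ^ b \<le> (3/4) ^ b / real d" .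
  have dpos: "0 < real d" using Dd D by (metis one_le_power zero_less_one order_less_le_trans)
  have "real d * real (K choose b) * q ^ b \<le> real d * ((3/4) ^ b / real d)"
    using mult_left_mono[OF a, of "real d"] dpos by (simp add: mult.assoc)
  also have "\<dots> = (3/4) ^ b" using dpos by simp
  also have "\<dots> \<le> (3/4) ^ 1" using b by (intro power_decreasing) auto
  finally show ?thesis by simp
qed

lemma numeric1:
  fixes D Lr q :: real and b d K :: nat
  assumes b: "1 \<le> b" and Dd: "D ^ b = real d" and D: "1 \<le> D" and Lr: "0 < Lr"
    and q: "q = 1 / (2 * exp 1 * D * Lr)" and K: "real K \<le> 3/2 * real b * Lr"
  shows "real b * real d * real ((K - 1) choose (b - 1)) * q ^ (b - 1) \<le> 9 * D"
proof -
  obtain c where bc: "b = Suc c" using b by (cases b) auto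
  have qn: "0 \<le> q" unfolding q using D Lr by auto
  define y where "y = real K * q"
  have y0: "0 \<le> y" unfolding y_def using qn by auto
  have y: "y \<le> 3 * real b / (4 * exp 1 * D)"
  proof -
    have "y \<le> 3/2 * real b * Lr * q" unfolding y_def using K qn by (intro mult_right_mono) auto
    also have "\<dots> = 3 * real b / (4 * exp 1 * D)" unfolding q using Lr D by (simp add: field_simps)
    finally show ?thesis .
  qed
  have "real ((K - 1) choose c) * q ^ c \<le> real (K - 1) ^ c / fact c * q ^ c"
    using choose_le qn by (intro mult_right_mono) auto
  also have "\<dots> \<le> real K ^ c / fact c * q ^ c"
    using qn by (intro mult_right_mono divide_right_mono power_mono) auto
  also have "\<dots> = y ^ c / fact c" unfolding y_def by (simp add: power_mult_distrib)
  also have "\<dots> \<le> (3 * real b / (4 * exp 1 * D)) ^ c / fact c"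
    using y y0 by (intro divide_right_mono power_mono) auto
  finally have a: "real ((K - 1) choose c) * q ^ c \<le> (3 * real b / (4 * exp 1 * D)) ^ c / fact c" .
  have Dc: "real d = D ^ c * D" using Dd bc by (simp add: mult.commute)
  have Dcp: "0 < D ^ c" using D by simp
  have "real b * real d * real ((K - 1) choose c) * q ^ c
      \<le> real b * real d * ((3 * real b / (4 * exp 1 * D)) ^ c / fact c)"
  proof -
    have "0 \<le> real b * real d" by simp
    from mult_left_mono[OF a this] show ?thesis by (simp only: mult.assoc)
  qed
  also have "\<dots> = real b * (3/4) ^ c * (real b ^ b / fact b) * D / exp 1 ^ c"
  proof -
    have e1: "(3 * real b / (4 * exp 1 * D)) ^ c = (3/4) ^ c * real b ^ c / (exp 1 ^ c * D ^ c)"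
    proof -
      have "3 * real b / (4 * exp 1 * D) = (3/4) * real b / (exp 1 * D)" by simp
      then show ?thesis by (simp add: power_divide power_mult_distrib)
    qed
    have f1: "(fact b::real) = real b * fact c" using bc by simp
    have f2: "real b ^ b = real b * real b ^ c" using bc by simp
    have e2: "real b ^ b / fact b = real b ^ c / fact c" unfolding f1 f2 using b by simp
    show ?thesis unfolding e1 e2 Dc using Dcp D by (simp add: field_simps)
  qed
  also have "\<dots> \<le> real b * (3/4) ^ c * exp (real b) * D / exp 1 ^ c"
    using pow_fact_exp[of b] D by (intro divide_right_mono mult_right_mono mult_left_mono) auto
  also have "\<dots> = exp 1 * ((real c + 1) * (3/4) ^ c * D)"
    unfolding bc by (simp add: exp_of_nat_mult[symmetric] exp_add field_simps)
  also have "\<dots> \<le> 3 * ((real c + 1) * (3/4) ^ c * D)"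
    using exp_le D by (intro mult_right_mono) auto
  also have "\<dots> \<le> 3 * (3 * D)"
    using lin_geo[of c] D by (intro mult_left_mono mult_right_mono) auto
  finally show ?thesis using bc by simp
qed

fun psi :: "real \<Rightarrow> nat \<Rightarrow> nat \<Rightarrow> real" where
  "psi q N 0 = 1"
| "psi q 0 (Suc c) = 0"
| "psi q (Suc N) (Suc c) = q * psi q N c + (1 - q) * psi q N (Suc c)"

lemma psi_nonneg: "0 \<le> q \<Longrightarrow> q \<le> 1 \<Longrightarrow> 0 \<le> psi q N c"
  by (induction q N c rule: psi.induct) auto

lemma psi_bound: "0 \<le> q \<Longrightarrow> q \<le> 1 \<Longrightarrow> psi q N c \<le> real (N choose c) * q ^ c"
proof (induction q N c rule: psi.induct)
  case (1 q N) then show ?case by simp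
next
  case (2 q c) then show ?case by simp
next
  case (3 q N c)
  have a: "q * psi q N c \<le> q * (real (N choose c) * q ^ c)"
    using 3 by (intro mult_left_mono) auto
  have "(1 - q) * psi q N (Suc c) \<le> psi q N (Suc c)"
    using psi_nonneg[OF 3(3,4), of N "Suc c"] 3(3) by (simp add: algebra_simps)
  also have "\<dots> \<le> real (N choose Suc c) * q ^ Suc c" using 3 by auto
  finally have "psi q (Suc N) (Suc c) \<le> q * (real (N choose c) * q ^ c) + real (N choose Suc c) * q ^ Suc c"
    using a by simp
  also have "\<dots> = real (Suc N choose Suc c) * q ^ Suc c" by (simp add: algebra_simps)
  finally show ?case .
qed


locale setting =
  fixes U :: "nat set" and n b k :: nat and eps :: real and d :: nat and t :: "nat \<Rightarrow> decl"
  assumes U: "finite U" "U \<noteq> {}" and n: "1 \<le> n" and b: "1 \<le> b" and k: "1 \<le> k"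
    and eps: "0 < eps" "eps < 1"
    and vt: "\<forall>i<n. valid_type U k (t i)"
    and dle: "\<forall>i<n. \<forall>S\<in>snd (t i). 0 < val (t i) S \<longrightarrow> card S \<le> d"
    and dex: "\<exists>i<n. \<exists>S\<in>snd (t i). 0 < val (t i) S \<and> card S = d"
begin

definition "jw = winner n t"
definition "vs = vmax (t jw)"
definition "mm = card U"
definition "pz = p0f U n b eps t"
definition "rb = rr b"
definition "qq = qprob b mm d"
definition "DD = real d powr (1 / real b)"
definition "Lr = log 2 (real (4 * b * mm))"
definition "KK = nat \<lceil>real b * Lr\<rceil>"
definition "st1 = astep U rb jw t False jw (st0 pz b)"
definition "rest = filter (\<lambda>i. i \<noteq> jw) [0..<n]"
definition "Sj = sel U t jw (st0 pz b)"

lemma ft: "i < n \<Longrightarrow> finite (snd (t i))" using vt valid_fin by blast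
lemma net: "i < n \<Longrightarrow> snd (t i) \<noteq> {}" using vt valid_ne k by blast
lemma jw: "jw < n" "\<And>i. i < n \<Longrightarrow> vmax (t i) \<le> vs"
  using winner_props[OF n, of t] unfolding jw_def vs_def by auto

lemma val_le_vs: "i < n \<Longrightarrow> val (t i) X \<le> vs"
  using val_le_vmax[OF ft net] jw(2) order_trans by blast

lemma vs_pos: "0 < vs"
proof -
  obtain i S where "i < n" "S \<in> snd (t i)" "0 < val (t i) S" using dex by auto
  then show ?thesis using val_le_vs[of i S] by simp
qed

lemma d_pos: "1 \<le> d"
proof -
  obtain i S where iS: "i < n" "S \<in> snd (t i)" "card S = d" using dex by auto
  have "S \<noteq> {}" "S \<subseteq> U" using vt iS unfolding valid_type_def by auto
  then have "0 < card S" using U(1) finite_subset card_gt_0_iff by blast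
  then show ?thesis using iS by simp
qed

lemma mm_pos: "0 < mm" unfolding mm_def using U card_gt_0_iff by blast

lemma pz: "pz = (1 + eps) * vs / (4 * real b * real mm)"
  unfolding pz_def p0f_def vs_def jw_def mm_def by simp

lemma pz_pos: "0 < pz" unfolding pz using vs_pos eps b mm_pos by auto

lemma rb_ge1: "1 \<le> rb" unfolding rb_def rr_def using b by (intro ge_one_powr_ge_zero) auto

lemma rb_le: "real b * (rb - 1) \<le> 1"
proof -
  have "1 + real b * (1 / real b) \<le> (1 + 1 / real b) ^ b"
  proof (rule Bernoulli_inequality)
    have "0 \<le> 1 / real b" by simp
    then show "- 1 \<le> 1 / real b" by linarith
  qed
  then have "2 \<le> (1 + 1 / real b) ^ b" using b by simp
  then have "2 powr (1 / real b) \<le> ((1 + 1 / real b) ^ b) powr (1 / real b)"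
    by (intro powr_mono2) auto
  also have "\<dots> = 1 + 1 / real b"
  proof -
    have x: "0 < 1 + 1 / real b" by (simp add: add_pos_nonneg)
    have "((1 + 1 / real b) ^ b) powr (1 / real b) = ((1 + 1 / real b) powr real b) powr (1 / real b)"
      using x by (simp add: powr_realpow)
    also have "\<dots> = (1 + 1 / real b) powr (real b * (1 / real b))" by (simp add: powr_powr)
    also have "\<dots> = 1 + 1 / real b" using b x by simp
    finally show ?thesis .
  qed
  finally show ?thesis unfolding rb_def rr_def using b by (simp add: field_simps)
qed

lemma Lr_ge: "2 \<le> Lr"
proof -
  have "1 * 1 \<le> b * mm" using b mm_pos by (intro mult_le_mono) auto
  then have "4 \<le> 4 * b * mm" by simp
  then have "(4::real) \<le> real (4 * b * mm)" by (simp only: of_nat_le_iff[symmetric] of_nat_numeral)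
  then have "log 2 4 \<le> log 2 (real (4 * b * mm))" by simp
  moreover have "log 2 (4::real) = 2"
  proof -
    have h: "log 2 ((2::real) powr 2) = 2" by (rule log_powr_cancel) auto
    have "(2::real) powr 2 = 4" by (simp add: powr_numeral)
    then show ?thesis using h by simp
  qed
  ultimately show ?thesis unfolding Lr_def by simp
qed

lemma DD: "1 \<le> DD" "DD ^ b = real d"
proof -
  show "1 \<le> DD" unfolding DD_def using d_pos b by (simp add: ge_one_powr_ge_zero)
  have "DD ^ b = real d powr (real b * (1 / real b))" unfolding DD_def using d_pos by (simp add: powr_power)
  also have "\<dots> = real d" using b d_pos by simp
  finally show "DD ^ b = real d" .
qed

lemma qq: "qq = 1 / (2 * exp 1 * DD * Lr)" unfolding qq_def qprob_def DD_def Lr_def by simp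

lemma qq01: "0 \<le> qq" "qq \<le> 1"
proof -
  have p: "1 \<le> 2 * exp 1 * DD * Lr"
  proof -
    have "1 \<le> exp (1::real)" by simp
    moreover have "1 \<le> DD" by (rule DD)
    moreover have "2 \<le> Lr" by (rule Lr_ge)
    ultimately have "1 * 1 * 1 \<le> exp 1 * DD * Lr" by (intro mult_mono) auto
    then show ?thesis by simp
  qed
  show "0 \<le> qq" unfolding qq using p by simp
  show "qq \<le> 1" unfolding qq using p by simp
qed

lemma KK_le: "real KK \<le> 3/2 * real b * Lr"
proof -
  have "real KK \<le> real b * Lr + 1" unfolding KK_def using Lr_ge b
    by (simp add: of_nat_nat ceiling_correct less_imp_le)
  moreover have "2 \<le> real b * Lr"
  proof -
    have "1 * 2 \<le> real b * Lr" using Lr_ge b by (intro mult_mono) auto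
    then show ?thesis by simp
  qed
  ultimately show ?thesis by linarith
qed

lemma sel_K:
  assumes "pz * rb ^ tt \<le> vs"
  shows "tt < KK"
proof -
  have rbp: "rb ^ tt = 2 powr (real tt / real b)" unfolding rb_def rr_def by (simp add: powr_power)
  have "(1 + eps) * vs / (4 * real b * real mm) * 2 powr (real tt / real b) \<le> vs"
    using assms unfolding pz rbp .
  then have "vs * ((1 + eps) * 2 powr (real tt / real b)) \<le> vs * (4 * real b * real mm)"
    using vs_pos b mm_pos by (simp add: field_simps)
  then have "(1 + eps) * 2 powr (real tt / real b) \<le> 4 * real b * real mm"
    using vs_pos by (simp only: mult_le_cancel_left_pos)
  moreover have "2 powr (real tt / real b) < (1 + eps) * 2 powr (real tt / real b)"
  proof -
    have "0 < eps * 2 powr (real tt / real b)" using eps by simp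
    then show ?thesis by (simp add: algebra_simps)
  qed
  ultimately have "2 powr (real tt / real b) < 4 * real b * real mm" by linarith
  then have "2 powr (real tt / real b) < real (4 * b * mm)" by simp
  then have "real tt / real b < Lr" unfolding Lr_def using b mm_pos by (subst powr_less_iff[symmetric]) auto
  then have "real tt < real b * Lr" using b by (simp add: field_simps)
  then have "real tt < real_of_int \<lceil>real b * Lr\<rceil>" by (meson le_of_int_ceiling order_less_le_trans)
  then show ?thesis unfolding KK_def by linarith
qed

end


lemma astep_j: "astep U r j D y j st = astep U r j D False j st"
  unfolding astep_def by simp

lemma sum_upd:
  fixes h :: "nat \<Rightarrow> 'b \<Rightarrow> real"
  assumes "finite I" "i \<in> I"
  shows "(\<Sum>l\<in>I. h l ((g(i := x)) l)) = (\<Sum>l\<in>I. h l (g l)) + (h i x - h i (g i))"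
proof -
  have "(\<Sum>l\<in>I. h l ((g(i := x)) l)) = h i x + (\<Sum>l\<in>I - {i}. h l ((g(i := x)) l))"
    using assms by (simp add: sum.remove)
  also have "(\<Sum>l\<in>I - {i}. h l ((g(i := x)) l)) = (\<Sum>l\<in>I - {i}. h l (g l))"
    by (intro sum.cong) auto
  also have "(\<Sum>l\<in>I. h l (g l)) = h i (g i) + (\<Sum>l\<in>I - {i}. h l (g l))"
    using assms by (simp add: sum.remove)
  ultimately show ?thesis by simp
qed

context setting
begin

lemma ordr_jw: "ordr n jw = jw # rest" unfolding ordr_def rest_def by simp
lemma rest_set: "set rest = {..<n} - {jw}" unfolding rest_def by auto
lemma rest_distinct: "distinct rest" unfolding rest_def by auto

lemma fin_dec: "fin U n b eps t c = afold U rb jw t c rest st1"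
  unfolding fin_def jw_def[symmetric] ordr_jw afold_Cons st1_def rb_def pz_def
  by (subst astep_j) simp

lemma fin_fold: "fin U n b eps t c = fold (\<lambda>i. astep U rb jw t (c i) i) rest st1"
  unfolding fin_dec afold_def ..

lemma st1_acc:
  "pr st1 = (\<lambda>e. if e \<in> Sj then rb * pz else pz)"
  "su st1 = (\<lambda>e. if e \<in> Sj then b - 1 else b)"
  "Ra st1 = (\<lambda>_. {})(jw := Sj)"
  "Tn st1 = (\<lambda>_. {})(jw := Sj)"
  "tc st1 = (\<lambda>e. if e \<in> Sj then 1 else 0)"
  unfolding st1_def astep_acc Sj_def by (auto simp: fun_eq_iff)

lemma Sj_eq: "Sj = choose_set (t jw) (\<lambda>_. pz) {e \<in> U. 0 < b}"
  unfolding Sj_def sel_def by simp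

lemma Sj_val: "val (t jw) Sj = vs"
  using first_val[OF U(1) n b eps, of k t c] alloc_first[OF n, of U b eps t c] vt jw(1) k
  unfolding Sj_eq vs_def jw_def pz_def by simp

lemma Sj_props: "Sj \<subseteq> U" "Sj \<in> snd (t jw)" "card Sj \<le> d"
proof -
  have f: "finite (snd (t jw))" using ft jw(1) .
  have "Sj \<subseteq> {e \<in> U. 0 < b}" unfolding Sj_eq using choose_props(1)[OF f] by blast
  then show "Sj \<subseteq> U" by auto
  have "Sj \<noteq> {}" using Sj_val vs_pos val_empty vt jw(1) by fastforce
  then show "Sj \<in> snd (t jw)" using choose_props(2)[OF f] unfolding Sj_eq by blast
  then show "card Sj \<le> d" using dle jw(1) Sj_val vs_pos by auto
qed

lemma coins_eq: "coins n b mm d = Pi_pmf {..<n} False (\<lambda>_. bernoulli_pmf qq)"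
  unfolding coins_def qq_def ..

lemma int_coins: "integrable (measure_pmf (coins n b mm d)) (f :: _ \<Rightarrow> real)"
  unfolding coins_eq
  by (intro integrable_measure_pmf_finite) (auto simp: set_Pi_pmf intro!: finite_PiE_dflt)

definition "Phi1 st = qq * (\<Sum>i<n. val (t i) (Tn st i)) - (\<Sum>i<n. val (t i) (Ra st i))"

lemma E1: "measure_pmf.expectation (coins n b mm d) (\<lambda>c. Phi1 (fin U n b eps t c)) \<le> qq * vs - vs"
proof -
  define Inv where "Inv = (\<lambda>B st. B \<subseteq> {..<n} - {jw} \<and> (\<forall>i\<in>B. Ra st i = {} \<and> Tn st i = {}))"
  have "measure_pmf.expectation (Pi_pmf {..<n} False (\<lambda>_. bernoulli_pmf qq))
           (\<lambda>c. Phi1 (fold (\<lambda>i. astep U rb jw t (c i) i) rest st1)) \<le> Phi1 st1"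
  proof (rule mart_fold2[where Inv = Inv])
    fix i y st B assume "i \<in> B" "Inv B st"
    then show "Inv (B - {i}) (astep U rb jw t y i st)" unfolding Inv_def by (auto simp: astep_acc)
  next
    fix i st B assume iB: "i \<in> B" and I: "Inv B st"
    have i: "i < n" "i \<noteq> jw" "Ra st i = {}" "Tn st i = {}" using iB I unfolding Inv_def by auto
    define S where "S = sel U t i st"
    define ST where "ST = (\<Sum>l<n. val (t l) (Tn st l))"
    define SR where "SR = (\<Sum>l<n. val (t l) (Ra st l))"
    have v0: "val (t i) {} = 0" using val_empty vt i(1) by blast
    have T: "(\<Sum>l<n. val (t l) (Tn (astep U rb jw t y i st) l)) = ST + val (t i) S" for y
      unfolding astep_acc ST_def S_def using sum_upd[of "{..<n}" i "\<lambda>l. val (t l)"] i v0 by simp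
    have R1: "(\<Sum>l<n. val (t l) (Ra (astep U rb jw t True i st) l)) = SR + val (t i) S"
      unfolding astep_acc SR_def S_def using sum_upd[of "{..<n}" i "\<lambda>l. val (t l)"] i v0 by simp
    have R0: "(\<Sum>l<n. val (t l) (Ra (astep U rb jw t False i st) l)) = SR"
      unfolding astep_acc SR_def S_def using sum_upd[of "{..<n}" i "\<lambda>l. val (t l)"] i v0 by simp
    show "qq * Phi1 (astep U rb jw t True i st) + (1 - qq) * Phi1 (astep U rb jw t False i st) \<le> Phi1 st"
      unfolding Phi1_def T R1 R0 ST_def[symmetric] SR_def[symmetric] by (simp add: algebra_simps)
  next
    show "Inv (set rest) st1" unfolding Inv_def rest_set st1_acc by auto
  qed (use qq01 rest_distinct rest_set in auto)
  moreover have "Phi1 st1 = qq * vs - vs"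
  proof -
    have "(\<Sum>l<n. val (t l) (((\<lambda>_. {})(jw := Sj)) l)) = (\<Sum>l<n. val (t l) {}) + (vs - val (t jw) {})"
      using sum_upd[of "{..<n}" jw "\<lambda>l. val (t l)" "\<lambda>_. {}" Sj] jw(1) Sj_val by simp
    also have "\<dots> = vs"
    proof -
      have "\<forall>l\<in>{..<n}. val (t l) {} = 0" using val_empty vt by blast
      then have "(\<Sum>l<n. val (t l) {}) = 0" by simp
      moreover have "val (t jw) {} = 0" using val_empty vt jw(1) by blast
      ultimately show ?thesis by simp
    qed
    finally show ?thesis unfolding Phi1_def st1_acc by simp
  qed
  ultimately show ?thesis unfolding coins_eq fin_fold by simp
qed

definition "Phi2 e st = psi qq (KK - tc st e) (su st e)"

lemma sel_info:
  assumes i: "i < n" and p: "\<forall>e'. pr st e' = pz * rb ^ tc st e'" and e: "e \<in> sel U t i st"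
  shows "tc st e < KK" "0 < su st e"
proof -
  have f: "finite (snd (t i))" using ft i .
  define S where "S = sel U t i st"
  have Ssub: "S \<subseteq> {e \<in> U. 0 < su st e}" unfolding S_def sel_def using choose_props(1)[OF f] by blast
  then show "0 < su st e" using e unfolding S_def by auto
  have "S \<noteq> {}" using e unfolding S_def by auto
  then have SS: "S \<in> snd (t i)" "sum (pr st) S \<le> val (t i) S"
    using choose_props(2)[OF f, of "pr st" "{e \<in> U. 0 < su st e}"] unfolding S_def sel_def by auto
  have fS: "finite S" using Ssub U(1) finite_subset by fastforce
  have pn: "\<forall>e'. 0 \<le> pr st e'" using p pz_pos rb_ge1 by simp
  have "pr st e \<le> sum (pr st) S" using e fS pn unfolding S_def[symmetric] by (intro member_le_sum) auto
  also have "\<dots> \<le> vs" using SS(2) val_le_vs[OF i, of S] by simp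
  finally show "tc st e < KK" using p sel_K by simp
qed

lemma E2: "measure_pmf.expectation (coins n b mm d) (\<lambda>c. Phi2 e (fin U n b eps t c)) \<le> Phi2 e st1"
proof -
  define Inv where "Inv = (\<lambda>B st. B \<subseteq> {..<n} - {jw} \<and> (\<forall>e'. pr st e' = pz * rb ^ tc st e'))"
  have "measure_pmf.expectation (Pi_pmf {..<n} False (\<lambda>_. bernoulli_pmf qq))
           (\<lambda>c. Phi2 e (fold (\<lambda>i. astep U rb jw t (c i) i) rest st1)) \<le> Phi2 e st1"
  proof (rule mart_fold2[where Inv = Inv])
    fix i y st B assume "i \<in> B" "Inv B st"
    then show "Inv (B - {i}) (astep U rb jw t y i st)" unfolding Inv_def by (auto simp: astep_acc)
  next
    fix i st B assume iB: "i \<in> B" and I: "Inv B st"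
    have i: "i < n" "i \<noteq> jw" and p: "\<forall>e'. pr st e' = pz * rb ^ tc st e'"
      using iB I unfolding Inv_def by auto
    show "qq * Phi2 e (astep U rb jw t True i st) + (1 - qq) * Phi2 e (astep U rb jw t False i st) \<le> Phi2 e st"
    proof (cases "e \<in> sel U t i st")
      case False
      then show ?thesis unfolding Phi2_def astep_acc using i by (simp add: algebra_simps)
    next
      case True
      have a: "tc st e < KK" "0 < su st e" using sel_info[OF i(1) p True] by auto
      obtain N where k1: "KK - tc st e = Suc N" using a(1) by (metis Suc_diff_Suc)
      obtain c' where s1: "su st e = Suc c'" using a(2) gr0_conv_Suc by blast
      have k2: "KK - Suc (tc st e) = N" using k1 by simp
      have "Phi2 e st = qq * psi qq (KK - Suc (tc st e)) (su st e - 1) + (1 - qq) * psi qq (KK - Suc (tc st e)) (su st e)"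
        unfolding Phi2_def k1 k2 s1 by simp
      then show ?thesis unfolding Phi2_def astep_acc using i True by simp
    qed
  next
    show "Inv (set rest) st1" unfolding Inv_def rest_set st1_acc by auto
  qed (use qq01 rest_distinct rest_set in auto)
  then show ?thesis unfolding coins_eq fin_fold by simp
qed

end


lemma swap_bound:
  fixes w :: "nat \<Rightarrow> real" and n b :: nat and T A :: "nat \<Rightarrow> nat set" and U :: "nat set"
  assumes fU: "finite U" and TA: "\<forall>i<n. T i \<subseteq> A i" and AU: "\<forall>i<n. A i \<subseteq> U"
    and cardA: "\<forall>e\<in>U. card {i \<in> {..<n}. e \<in> A i} \<le> b" and w: "\<forall>e\<in>U. 0 \<le> w e"
  shows "(\<Sum>i<n. \<Sum>e\<in>T i. w e) \<le> real b * (\<Sum>e\<in>U. w e)"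
proof -
  have "(\<Sum>i<n. \<Sum>e\<in>T i. w e) = (\<Sum>i<n. \<Sum>e\<in>U. if e \<in> T i then w e else 0)"
  proof (rule sum.cong[OF refl])
    fix i assume "i \<in> {..<n}"
    then have "U \<inter> T i = T i" using TA AU by auto
    then show "(\<Sum>e\<in>T i. w e) = (\<Sum>e\<in>U. if e \<in> T i then w e else 0)"
      using sum.inter_restrict[OF fU, of w "T i"] by simp
  qed
  also have "\<dots> = (\<Sum>e\<in>U. \<Sum>i<n. if e \<in> T i then w e else 0)" by (rule sum.swap)
  also have "\<dots> = (\<Sum>e\<in>U. w e * real (card {i \<in> {..<n}. e \<in> T i}))"
  proof (rule sum.cong[OF refl])
    fix e assume "e \<in> U"
    have fn: "finite {..<n}" by simp
    have "(\<Sum>i<n. if e \<in> T i then w e else 0) = (\<Sum>i\<in>{..<n} \<inter> {i. e \<in> T i}. w e)"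
      using sum.inter_restrict[OF fn, of "\<lambda>_. w e" "{i. e \<in> T i}"] by (simp del: sum_constant)
    also have "{..<n} \<inter> {i. e \<in> T i} = {i \<in> {..<n}. e \<in> T i}" by auto
    finally show "(\<Sum>i<n. if e \<in> T i then w e else 0) = w e * real (card {i \<in> {..<n}. e \<in> T i})" by simp
  qed
  also have "\<dots> \<le> (\<Sum>e\<in>U. w e * real b)"
  proof (intro sum_mono mult_left_mono)
    fix e assume e: "e \<in> U"
    have "card {i \<in> {..<n}. e \<in> T i} \<le> card {i \<in> {..<n}. e \<in> A i}" using TA by (intro card_mono) auto
    moreover have "card {i \<in> {..<n}. e \<in> A i} \<le> b" using cardA e by blast
    ultimately show "real (card {i \<in> {..<n}. e \<in> T i}) \<le> real b" by linarith
    show "0 \<le> w e" using w e by auto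
  qed
  also have "\<dots> = real b * (\<Sum>e\<in>U. w e)" by (simp add: sum_distrib_left mult.commute)
  finally show ?thesis .
qed

locale opt = setting +
  fixes A :: "nat \<Rightarrow> nat set"
  assumes AU: "\<forall>i<n. A i \<subseteq> U" and Af: "\<forall>e\<in>U. card {i \<in> {..<n}. e \<in> A i} \<le> b"
begin

definition "va i = val (t i) (A i)"
definition "Tp i = (if 0 < va i then (SOME T. T \<in> snd (t i) \<and> T \<subseteq> A i \<and> va i = fst (t i) T) else {})"

lemma va_nonneg: "i < n \<Longrightarrow> 0 \<le> va i" unfolding va_def using val_nonneg ft by blast

lemma Tp_props:
  assumes i: "i < n"
  shows "Tp i \<subseteq> A i" "finite (Tp i)" "card (Tp i) \<le> d"
    "0 < va i \<Longrightarrow> Tp i \<in> snd (t i) \<and> va i = fst (t i) (Tp i)"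
proof -
  have P: "0 < va i \<Longrightarrow> Tp i \<in> snd (t i) \<and> Tp i \<subseteq> A i \<and> va i = fst (t i) (Tp i)"
  proof -
    assume v: "0 < va i"
    then have "\<exists>T. T \<in> snd (t i) \<and> T \<subseteq> A i \<and> va i = fst (t i) T"
      using val_pos_ex[OF ft[OF i]] unfolding va_def by blast
    from someI_ex[OF this] show ?thesis unfolding Tp_def using v by simp
  qed
  show "Tp i \<subseteq> A i" using P unfolding Tp_def by (cases "0 < va i") auto
  moreover have "A i \<subseteq> U" using AU i by auto
  ultimately have "Tp i \<subseteq> U" by (rule order_trans)
  then show "finite (Tp i)" using U(1) by (rule finite_subset)
  show "0 < va i \<Longrightarrow> Tp i \<in> snd (t i) \<and> va i = fst (t i) (Tp i)" using P by auto
  show "card (Tp i) \<le> d"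
  proof (cases "0 < va i")
    case True
    then have "Tp i \<in> snd (t i)" "va i = fst (t i) (Tp i)" using P by auto
    moreover have "fst (t i) (Tp i) \<le> val (t i) (Tp i)" using val_self[OF ft[OF i]] calculation(1) .
    ultimately have "0 < val (t i) (Tp i)" "Tp i \<in> snd (t i)" using True by auto
    then show ?thesis using dle i by blast
  next
    case False then show ?thesis unfolding Tp_def by simp
  qed
qed

lemma charge:
  assumes i: "i < n" and p: "\<forall>e. 0 \<le> pr st e"
  shows "va i \<le> val (t i) (sel U t i st) + (\<Sum>e\<in>Tp i. pr st e) + va i * real (card {e \<in> Tp i. su st e = 0})"
proof -
  have f: "finite (snd (t i))" using ft i .
  have S0: "0 \<le> val (t i) (sel U t i st)" using val_nonneg f by blast
  have P0: "0 \<le> (\<Sum>e\<in>Tp i. pr st e)" using p by (simp add: sum_nonneg)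
  have X0: "0 \<le> va i * real (card {e \<in> Tp i. su st e = 0})" using va_nonneg i by simp
  show ?thesis
  proof (cases "0 < va i")
    case False
    then show ?thesis using S0 P0 X0 by linarith
  next
    case True
    note T = Tp_props[OF i]
    have Tt: "Tp i \<in> snd (t i)" "va i = fst (t i) (Tp i)" using T(4) True by auto
    show ?thesis
    proof (cases "\<exists>e\<in>Tp i. su st e = 0")
      case True
      then have "{e \<in> Tp i. su st e = 0} \<noteq> {}" by auto
      then have "1 \<le> card {e \<in> Tp i. su st e = 0}" using T(2) by (simp add: Suc_leI card_gt_0_iff)
      then have "va i * 1 \<le> va i * real (card {e \<in> Tp i. su st e = 0})" using va_nonneg i
        by (intro mult_left_mono) auto
      then have "va i \<le> va i * real (card {e \<in> Tp i. su st e = 0})" by simp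
      then show ?thesis using S0 P0 by linarith
    next
      case False
      then have sub: "Tp i \<subseteq> {e \<in> U. 0 < su st e}" using T(1) AU i by auto
      show ?thesis
      proof (cases "sum (pr st) (Tp i) \<le> val (t i) (Tp i)")
        case True
        then have "val (t i) (Tp i) \<le> val (t i) (sel U t i st)"
          using choose_props(3)[OF f Tt(1) sub] unfolding sel_def by simp
        moreover have "va i \<le> val (t i) (Tp i)" using Tt val_self[OF f Tt(1)] by simp
        ultimately show ?thesis using P0 X0 by linarith
      next
        case False
        moreover have "va i \<le> val (t i) (Tp i)" using Tt val_self[OF f Tt(1)] by simp
        ultimately show ?thesis using S0 X0 by linarith
      qed
    qed
  qed
qed

end


context opt
begin

definition "Vs st P = (\<Sum>i\<in>P. val (t i) (Tn st i))"
definition "Ps st P = (\<Sum>i\<in>P. \<Sum>e\<in>Tp i. pr st e)"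
definition "Xs st P = (\<Sum>i\<in>P. va i * real (card {e \<in> Tp i. su st e = 0}))"

definition "Idet P st \<longleftrightarrow> finite P \<and> P \<subseteq> {..<n} \<and> (\<forall>e. 0 \<le> pr st e) \<and>
   sum va P \<le> Vs st P + Ps st P + Xs st P \<and>
   (\<Sum>e\<in>U. pr st e) \<le> real mm * pz + (rb - 1) * Vs st P"

lemma Idet_step:
  assumes i: "i < n" "i \<notin> P" and I: "Idet P st"
  shows "Idet (insert i P) (astep U rb jw t y i st)"
proof -
  define st' where "st' = astep U rb jw t y i st"
  define S where "S = sel U t i st"
  have fP: "finite P" and Pn: "P \<subseteq> {..<n}" and pn: "\<forall>e. 0 \<le> pr st e"
    and inv1: "sum va P \<le> Vs st P + Ps st P + Xs st P"
    and inv2: "(\<Sum>e\<in>U. pr st e) \<le> real mm * pz + (rb - 1) * Vs st P"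
    using I unfolding Idet_def by auto
  have f: "finite (snd (t i))" using ft i(1) .
  have pr': "pr st' = (\<lambda>e. if e \<in> S then rb * pr st e else pr st e)" unfolding st'_def S_def astep_acc ..
  have Tn': "Tn st' = (Tn st)(i := S)" unfolding st'_def S_def astep_acc ..
  have prle: "\<And>e. pr st e \<le> pr st' e"
  proof -
    fix e
    have "1 * pr st e \<le> rb * pr st e" using rb_ge1 pn by (intro mult_right_mono) auto
    then have "pr st e \<le> rb * pr st e" by simp
    then show "pr st e \<le> pr st' e" unfolding pr' by simp
  qed
  have pn': "\<forall>e. 0 \<le> pr st' e" using pn prle order_trans by blast
  have su0: "\<And>e. su st e = 0 \<Longrightarrow> su st' e = 0" unfolding st'_def astep_acc by simp
  have V1: "Vs st' P = Vs st P" unfolding Vs_def Tn' using i(2) by (intro sum.cong) auto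
  have P1: "Ps st P \<le> Ps st' P" unfolding Ps_def using prle by (intro sum_mono) auto
  have X1: "Xs st P \<le> Xs st' P" unfolding Xs_def
  proof (intro sum_mono mult_left_mono)
    fix l assume l: "l \<in> P"
    have "finite (Tp l)" using Tp_props(2) Pn l by auto
    then have "card {e \<in> Tp l. su st e = 0} \<le> card {e \<in> Tp l. su st' e = 0}"
      using su0 by (intro card_mono) auto
    then show "real (card {e \<in> Tp l. su st e = 0}) \<le> real (card {e \<in> Tp l. su st' e = 0})" by simp
    show "0 \<le> va l" using va_nonneg Pn l by auto
  qed
  have ch: "va i \<le> val (t i) S + (\<Sum>e\<in>Tp i. pr st' e) + va i * real (card {e \<in> Tp i. su st' e = 0})"
  proof -
    have a: "va i \<le> val (t i) S + (\<Sum>e\<in>Tp i. pr st e) + va i * real (card {e \<in> Tp i. su st e = 0})"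
      using charge[OF i(1) pn] unfolding S_def .
    have b1: "(\<Sum>e\<in>Tp i. pr st e) \<le> (\<Sum>e\<in>Tp i. pr st' e)" using prle by (intro sum_mono) auto
    have "card {e \<in> Tp i. su st e = 0} \<le> card {e \<in> Tp i. su st' e = 0}"
      using su0 Tp_props(2)[OF i(1)] by (intro card_mono) auto
    then have b2: "va i * real (card {e \<in> Tp i. su st e = 0}) \<le> va i * real (card {e \<in> Tp i. su st' e = 0})"
      using va_nonneg[OF i(1)] by (intro mult_left_mono) auto
    show ?thesis using a b1 b2 by linarith
  qed
  have Vins: "Vs st' (insert i P) = val (t i) S + Vs st P"
    unfolding Vs_def using fP i(2) V1[unfolded Vs_def] by (simp add: Tn')
  have Pins: "Ps st' (insert i P) = (\<Sum>e\<in>Tp i. pr st' e) + Ps st' P"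
    unfolding Ps_def using fP i(2) by simp
  have Xins: "Xs st' (insert i P) = va i * real (card {e \<in> Tp i. su st' e = 0}) + Xs st' P"
    unfolding Xs_def using fP i(2) by simp
  have new1: "sum va (insert i P) \<le> Vs st' (insert i P) + Ps st' (insert i P) + Xs st' (insert i P)"
    using inv1 ch P1 X1 fP i(2) unfolding Vins Pins Xins by simp
  have SU: "S \<subseteq> U" using choose_props(1)[OF f] unfolding S_def sel_def by blast
  have sS: "sum (pr st) S \<le> val (t i) S"
    using choose_props(2)[OF f, of "pr st" "{e \<in> U. 0 < su st e}"] val_nonneg[OF f, of "{}"]
    unfolding S_def sel_def by auto
  have "(\<Sum>e\<in>U. pr st' e) = (\<Sum>e\<in>U. pr st e + (if e \<in> S then (rb - 1) * pr st e else 0))"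
    unfolding pr' by (intro sum.cong) (auto simp: algebra_simps)
  also have "\<dots> = (\<Sum>e\<in>U. pr st e) + (\<Sum>e\<in>U \<inter> S. (rb - 1) * pr st e)"
    by (simp add: sum.distrib sum.inter_restrict[OF U(1)])
  also have "U \<inter> S = S" using SU by auto
  also have "(\<Sum>e\<in>S. (rb - 1) * pr st e) = (rb - 1) * sum (pr st) S" by (simp add: sum_distrib_left)
  also have "\<dots> \<le> (rb - 1) * val (t i) S" using sS rb_ge1 by (intro mult_left_mono) auto
  finally have "(\<Sum>e\<in>U. pr st' e) \<le> real mm * pz + (rb - 1) * Vs st P + (rb - 1) * val (t i) S"
    using inv2 by linarith
  then have new2: "(\<Sum>e\<in>U. pr st' e) \<le> real mm * pz + (rb - 1) * Vs st' (insert i P)"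
    unfolding Vins by (simp add: algebra_simps)
  show ?thesis unfolding st'_def[symmetric] Idet_def using fP Pn i(1) pn' new1 new2 by auto
qed

lemma Idet_fin: "Idet {..<n} (fin U n b eps t c)"
proof -
  have "Idet ({} \<union> set (ordr n jw)) (fold (\<lambda>i. astep U rb jw t (c i) i) (ordr n jw) (st0 pz b))"
  proof (rule fold_inv[where I = Idet])
    fix i P st assume "i \<in> set (ordr n jw)" "i \<notin> P" "Idet P st"
    then show "Idet (insert i P) (astep U rb jw t (c i) i st)"
      using Idet_step ordr_set[OF jw(1)] by auto
  next
    show "distinct (ordr n jw)" by (rule ordr_distinct)
    show "set (ordr n jw) \<inter> {} = {}" by simp
    show "Idet {} (st0 pz b)" unfolding Idet_def Vs_def Ps_def Xs_def using pz_pos mm_def by simp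
  qed
  then show ?thesis unfolding fin_def afold_def ordr_set[OF jw(1)] jw_def[symmetric] rb_def[symmetric]
      pz_def[symmetric] by simp
qed

lemma det_final:
  "sum va {..<n} \<le> 2 * Vs (fin U n b eps t c) {..<n} + vs / 2 + Xs (fin U n b eps t c) {..<n}"
proof -
  define F where "F = fin U n b eps t c"
  have I: "sum va {..<n} \<le> Vs F {..<n} + Ps F {..<n} + Xs F {..<n}"
    "(\<Sum>e\<in>U. pr F e) \<le> real mm * pz + (rb - 1) * Vs F {..<n}" "\<forall>e. 0 \<le> pr F e"
    using Idet_fin unfolding Idet_def F_def by auto
  have V0: "0 \<le> Vs F {..<n}" unfolding Vs_def
  proof (rule sum_nonneg)
    fix i assume "i \<in> {..<n}"
    then show "0 \<le> val (t i) (Tn F i)" using val_nonneg ft by auto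
  qed
  have "Ps F {..<n} \<le> real b * (\<Sum>e\<in>U. pr F e)"
    unfolding Ps_def using Tp_props(1) AU Af I(3) U(1) by (intro swap_bound) auto
  also have "\<dots> \<le> real b * (real mm * pz + (rb - 1) * Vs F {..<n})"
    using I(2) by (intro mult_left_mono) auto
  also have "\<dots> = real b * real mm * pz + (real b * (rb - 1)) * Vs F {..<n}" by (simp add: algebra_simps)
  also have "real b * real mm * pz = (1 + eps) * vs / 4" unfolding pz using b mm_pos by simp
  also have "(real b * (rb - 1)) * Vs F {..<n} \<le> 1 * Vs F {..<n}" using rb_le V0 by (intro mult_right_mono) auto
  finally have "Ps F {..<n} \<le> (1 + eps) * vs / 4 + Vs F {..<n}" by simp
  moreover have "(1 + eps) * vs / 4 \<le> vs / 2" using eps vs_pos by simp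
  ultimately show ?thesis using I(1) unfolding F_def by linarith
qed

end


context opt
begin

abbreviation "Mc \<equiv> measure_pmf (coins n b mm d)"

definition "Wf c = (\<Sum>i<n. val (t i) (Ra (fin U n b eps t c) i))"

lemma card_le_Phi2:
  assumes i: "i < n"
  shows "real (card {e \<in> Tp i. su st e = 0}) \<le> (\<Sum>e\<in>Tp i. Phi2 e st)"
proof -
  have fT: "finite (Tp i)" using Tp_props(2)[OF i] .
  have "real (card {e \<in> Tp i. su st e = 0}) = (\<Sum>e\<in>{e \<in> Tp i. su st e = 0}. 1)" by simp
  also have "\<dots> = (\<Sum>e\<in>Tp i. if su st e = 0 then 1 else 0)"
    using sum.inter_filter[OF fT, of "\<lambda>_. (1::real)" "\<lambda>e. su st e = 0"] by (simp del: sum_constant)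
  also have "\<dots> \<le> (\<Sum>e\<in>Tp i. Phi2 e st)"
  proof (rule sum_mono)
    fix e assume "e \<in> Tp i"
    show "(if su st e = 0 then 1 else 0) \<le> Phi2 e st"
      unfolding Phi2_def using psi_nonneg[OF qq01] by (cases "su st e") auto
  qed
  finally show ?thesis .
qed

lemma Phi2_st1: "Phi2 e st1 \<le> real (KK choose b) * qq ^ b + (if e \<in> Sj then real ((KK - 1) choose (b - 1)) * qq ^ (b - 1) else 0)"
proof -
  have b0: "0 \<le> real (KK choose b) * qq ^ b" using qq01 by simp
  show ?thesis
  proof (cases "e \<in> Sj")
    case True
    then have "Phi2 e st1 = psi qq (KK - 1) (b - 1)" unfolding Phi2_def st1_acc by simp
    also have "\<dots> \<le> real ((KK - 1) choose (b - 1)) * qq ^ (b - 1)" using psi_bound qq01 by blast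
    finally show ?thesis using True b0 by simp
  next
    case False
    then have "Phi2 e st1 = psi qq KK b" unfolding Phi2_def st1_acc by simp
    also have "\<dots> \<le> real (KK choose b) * qq ^ b" using psi_bound qq01 by blast
    finally show ?thesis using False by simp
  qed
qed

lemma Wf_ge: "vs \<le> Wf c"
proof -
  have "Ra (fin U n b eps t c) jw = Sj"
    unfolding fin_dec using Ra_other[of jw rest] rest_set st1_acc by simp
  then have "vs = val (t jw) (Ra (fin U n b eps t c) jw)" using Sj_val by simp
  also have "\<dots> \<le> Wf c" unfolding Wf_def using jw(1) val_nonneg ft
    by (intro member_le_sum) auto
  finally show ?thesis .
qed

lemma main_bound: "sum va {..<n} \<le> 100 * DD * Lr * measure_pmf.expectation (coins n b mm d) Wf"
proof -
  define OP where "OP = sum va {..<n}"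
  define V where "V = (\<lambda>c. Vs (fin U n b eps t c) {..<n})"
  define \<beta>0 where "\<beta>0 = real (KK choose b) * qq ^ b"
  define \<beta>1 where "\<beta>1 = real ((KK - 1) choose (b - 1)) * qq ^ (b - 1)"
  define EV where "EV = measure_pmf.expectation (coins n b mm d) V"
  define EW where "EW = measure_pmf.expectation (coins n b mm d) Wf"
  have b0: "0 \<le> \<beta>0" "0 \<le> \<beta>1" unfolding \<beta>0_def \<beta>1_def using qq01 by auto
  have OP0: "0 \<le> OP" unfolding OP_def by (intro sum_nonneg) (use va_nonneg in auto)
  have pw: "\<And>c. OP \<le> 2 * V c + vs / 2 + (\<Sum>i<n. va i * (\<Sum>e\<in>Tp i. Phi2 e (fin U n b eps t c)))"
  proof -
    fix c
    have "Xs (fin U n b eps t c) {..<n} \<le> (\<Sum>i<n. va i * (\<Sum>e\<in>Tp i. Phi2 e (fin U n b eps t c)))"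
      unfolding Xs_def using card_le_Phi2 va_nonneg by (intro sum_mono mult_left_mono) auto
    then show "OP \<le> 2 * V c + vs / 2 + (\<Sum>i<n. va i * (\<Sum>e\<in>Tp i. Phi2 e (fin U n b eps t c)))"
      using det_final[of c] unfolding OP_def V_def by linarith
  qed
  have "OP = measure_pmf.expectation (coins n b mm d) (\<lambda>c. OP)" by simp
  also have "\<dots> \<le> measure_pmf.expectation (coins n b mm d)
      (\<lambda>c. 2 * V c + vs / 2 + (\<Sum>i<n. va i * (\<Sum>e\<in>Tp i. Phi2 e (fin U n b eps t c))))"
    using pw by (intro integral_mono int_coins) auto
  also have "\<dots> = 2 * EV + vs / 2 + (\<Sum>i<n. va i * (\<Sum>e\<in>Tp i.
        measure_pmf.expectation (coins n b mm d) (\<lambda>c. Phi2 e (fin U n b eps t c))))"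
    unfolding EV_def
    by (simp add: Bochner_Integration.integral_add int_coins integral_sum integral_mult_right_zero)
  also have "\<dots> \<le> 2 * EV + vs / 2 + (\<Sum>i<n. va i * (\<Sum>e\<in>Tp i. \<beta>0 + (if e \<in> Sj then \<beta>1 else 0)))"
  proof -
    have "\<And>e. measure_pmf.expectation (coins n b mm d) (\<lambda>c. Phi2 e (fin U n b eps t c)) \<le> \<beta>0 + (if e \<in> Sj then \<beta>1 else 0)"
      using E2 Phi2_st1 unfolding \<beta>0_def \<beta>1_def by (meson order_trans)
    then show ?thesis using va_nonneg by (intro add_left_mono sum_mono mult_left_mono) auto
  qed
  also have "(\<Sum>i<n. va i * (\<Sum>e\<in>Tp i. \<beta>0 + (if e \<in> Sj then \<beta>1 else 0)))
      = (\<Sum>i<n. va i * (real (card (Tp i)) * \<beta>0 + real (card (Tp i \<inter> Sj)) * \<beta>1))"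
  proof (rule sum.cong[OF refl])
    fix i assume i: "i \<in> {..<n}"
    have fT: "finite (Tp i)" using Tp_props(2) i by auto
    have "(\<Sum>e\<in>Tp i. (if e \<in> Sj then \<beta>1 else 0)) = (\<Sum>e\<in>Tp i \<inter> Sj. \<beta>1)"
      using sum.inter_restrict[OF fT, of "\<lambda>_. \<beta>1" Sj] by (simp del: sum_constant)
    then show "va i * (\<Sum>e\<in>Tp i. \<beta>0 + (if e \<in> Sj then \<beta>1 else 0)) =
        va i * (real (card (Tp i)) * \<beta>0 + real (card (Tp i \<inter> Sj)) * \<beta>1)"
      by (simp add: sum.distrib)
  qed
  also have "\<dots> \<le> (\<Sum>i<n. va i * (real d * \<beta>0) + vs * (real (card (Tp i \<inter> Sj)) * \<beta>1))"
  proof (rule sum_mono)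
    fix i assume i: "i \<in> {..<n}"
    have a: "va i * (real (card (Tp i)) * \<beta>0) \<le> va i * (real d * \<beta>0)"
      using Tp_props(3) i va_nonneg b0 by (intro mult_left_mono mult_right_mono) auto
    have "va i \<le> vs" unfolding va_def using val_le_vs i by auto
    then have c: "va i * (real (card (Tp i \<inter> Sj)) * \<beta>1) \<le> vs * (real (card (Tp i \<inter> Sj)) * \<beta>1)"
      using b0 by (intro mult_right_mono) auto
    show "va i * (real (card (Tp i)) * \<beta>0 + real (card (Tp i \<inter> Sj)) * \<beta>1)
        \<le> va i * (real d * \<beta>0) + vs * (real (card (Tp i \<inter> Sj)) * \<beta>1)"
      using a c by (simp add: distrib_left)
  qed
  also have "\<dots> = real d * \<beta>0 * OP + vs * \<beta>1 * (\<Sum>i<n. real (card (Tp i \<inter> Sj)))"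
    unfolding OP_def by (simp add: sum.distrib sum_distrib_left sum_distrib_right algebra_simps)
  also have "\<dots> \<le> 3/4 * OP + vs * \<beta>1 * (real b * real d)"
  proof (intro add_mono mult_right_mono mult_left_mono)
    show "real d * \<beta>0 \<le> 3/4"
      unfolding \<beta>0_def using numeric0[OF b DD(2) DD(1) _ qq KK_le] Lr_ge by (simp add: mult.assoc)
    show "0 \<le> OP" by (rule OP0)
    show "0 \<le> vs * \<beta>1" using vs_pos b0 by simp
    have "(\<Sum>i<n. real (card (Tp i \<inter> Sj))) = (\<Sum>i<n. \<Sum>e\<in>Tp i. if e \<in> Sj then 1 else 0)"
    proof (rule sum.cong[OF refl])
      fix i assume i: "i \<in> {..<n}"
      have fT: "finite (Tp i)" using Tp_props(2) i by auto
      show "real (card (Tp i \<inter> Sj)) = (\<Sum>e\<in>Tp i. if e \<in> Sj then 1 else 0)"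
        using sum.inter_restrict[OF fT, of "\<lambda>_. (1::real)" Sj] by simp
    qed
    also have "\<dots> \<le> real b * (\<Sum>e\<in>U. if e \<in> Sj then 1 else 0)"
      using Tp_props(1) AU Af U(1) by (intro swap_bound) auto
    also have "(\<Sum>e\<in>U. if e \<in> Sj then (1::real) else 0) = real (card Sj)"
      using sum.inter_restrict[OF U(1), of "\<lambda>_. (1::real)" Sj] Sj_props(1) by (simp add: Int_absorb1)
    also have "real b * real (card Sj) \<le> real b * real d" using Sj_props(3) by (intro mult_left_mono) auto
    finally show "(\<Sum>i<n. real (card (Tp i \<inter> Sj))) \<le> real b * real d" .
  qed
  finally have A1: "OP \<le> 2 * EV + vs / 2 + 3/4 * OP + vs * \<beta>1 * (real b * real d)" by simp
  have A2: "vs * \<beta>1 * (real b * real d) \<le> vs * (9 * DD)"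
  proof -
    have "real b * real d * \<beta>1 \<le> 9 * DD"
      unfolding \<beta>1_def using numeric1[OF b DD(2) DD(1) _ qq KK_le] Lr_ge by (simp add: mult.assoc)
    then show ?thesis using vs_pos by (simp add: algebra_simps mult_left_mono)
  qed
  have A3: "qq * EV \<le> EW"
  proof -
    have "measure_pmf.expectation (coins n b mm d) (\<lambda>c. Phi1 (fin U n b eps t c)) = qq * EV - EW"
      unfolding Phi1_def EV_def EW_def V_def Vs_def Wf_def
      by (simp add: Bochner_Integration.integral_diff int_coins integral_mult_right_zero)
    moreover have "qq * vs \<le> 1 * vs" using qq01 vs_pos by (intro mult_right_mono) auto
    ultimately show ?thesis using E1 by linarith
  qed
  have A4: "vs \<le> EW"
  proof -
    have "vs = measure_pmf.expectation (coins n b mm d) (\<lambda>_. vs)" by simp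
    also have "\<dots> \<le> EW" unfolding EW_def using Wf_ge by (intro integral_mono int_coins) auto
    finally show ?thesis .
  qed
  have qpos: "0 < qq" unfolding qq using DD(1) Lr_ge by simp
  have A5: "EV \<le> 2 * exp 1 * DD * Lr * EW"
  proof -
    have "EV = (2 * exp 1 * DD * Lr) * (qq * EV)" unfolding qq using DD(1) Lr_ge by simp
    also have "\<dots> \<le> (2 * exp 1 * DD * Lr) * EW" using A3 DD(1) Lr_ge by (intro mult_left_mono) auto
    finally show ?thesis .
  qed
  have EW0: "0 \<le> EW" using A4 vs_pos by simp
  have DL: "1 \<le> DD * Lr"
  proof -
    have "1 * 1 \<le> DD * Lr" using DD(1) Lr_ge by (intro mult_mono) auto
    then show ?thesis by simp
  qed
  have "OP \<le> 8 * EV + 2 * vs + 36 * DD * vs"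
  proof -
    have "vs * (9 * DD) = 9 * (DD * vs)" "36 * DD * vs = 36 * (DD * vs)" by simp_all
    then show ?thesis using A1 A2 by linarith
  qed
  also have "\<dots> \<le> 8 * (2 * exp 1 * DD * Lr * EW) + 2 * EW + 36 * DD * EW"
  proof -
    have "36 * DD * vs \<le> 36 * DD * EW" using A4 DD(1) by (intro mult_left_mono) auto
    then show ?thesis using A4 A5 by linarith
  qed
  also have "\<dots> \<le> 48 * (DD * Lr * EW) + 2 * (DD * Lr * EW) + 36 * (DD * Lr * EW)"
  proof -
    have e3: "exp 1 \<le> (3::real)" using exp_le by simp
    have p0: "0 \<le> DD * Lr * EW" using DD(1) Lr_ge EW0 by simp
    have "8 * (2 * exp 1 * DD * Lr * EW) = (16 * exp 1) * (DD * Lr * EW)" by (simp add: algebra_simps)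
    also have "\<dots> \<le> 48 * (DD * Lr * EW)" using e3 p0 by (intro mult_right_mono) auto
    finally have t1: "8 * (2 * exp 1 * DD * Lr * EW) \<le> 48 * (DD * Lr * EW)" .
    have "EW * 1 \<le> EW * (DD * Lr)" using DL EW0 by (intro mult_left_mono) auto
    then have t2: "2 * EW \<le> 2 * (DD * Lr * EW)" by (simp add: algebra_simps)
    have "(DD * EW) * 1 \<le> (DD * EW) * Lr" using Lr_ge DD(1) EW0 by (intro mult_left_mono) auto
    then have t3: "36 * DD * EW \<le> 36 * (DD * Lr * EW)" by (simp add: algebra_simps)
    show ?thesis using t1 t2 t3 by linarith
  qed
  also have "\<dots> \<le> 100 * DD * Lr * EW"
  proof -
    have "0 \<le> DD * Lr * EW" using DD(1) Lr_ge EW0 by simp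
    then show ?thesis by (simp add: algebra_simps)
  qed
  finally show ?thesis unfolding OP_def EW_def .
qed

end


lemma part3:
  assumes eps: "0 < eps" "eps < 1"
    and U: "finite U" "U \<noteq> {}" and n: "1 \<le> n" and b: "1 \<le> b" and k: "1 \<le> k"
    and vt: "\<forall>i<n. valid_type U k (t i)"
    and dle: "\<forall>i<n. \<forall>S\<in>snd (t i). 0 < val (t i) S \<longrightarrow> card S \<le> d"
    and dex: "\<exists>i<n. \<exists>S\<in>snd (t i). 0 < val (t i) S \<and> card S = d"
  shows "OPT U n b t \<le> 100 * real d powr (1 / real b) * log 2 (real (4 * b * card U)) *
                measure_pmf.expectation (coins n b (card U) d)
                  (\<lambda>c. welfare n t (mpu_alloc U n b eps t c))"
proof -
  interpret setting U n b k eps d t using assms by unfold_locales auto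
  define \<Omega> where "\<Omega> = {A. A \<in> {..<n} \<rightarrow>\<^sub>E Pow U \<and> feasible U n b A}"
  have fin\<Omega>: "finite \<Omega>" unfolding \<Omega>_def using U(1)
    by (intro finite_subset[OF _ finite_PiE[of "{..<n}" "\<lambda>_. Pow U"]]) auto
  have "restrict (\<lambda>_. {}) {..<n} \<in> \<Omega>" unfolding \<Omega>_def feasible_def by auto
  then have ne: "welfare n t ` \<Omega> \<noteq> {}" by auto
  have "Max (welfare n t ` \<Omega>) \<in> welfare n t ` \<Omega>" using fin\<Omega> ne by (intro Max_in) auto
  then obtain A where A: "A \<in> \<Omega>" "OPT U n b t = welfare n t A" unfolding OPT_def \<Omega>_def[symmetric] by auto
  have AU: "\<forall>i<n. A i \<subseteq> U" using A(1) unfolding \<Omega>_def by (auto simp: PiE_def Pi_def)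
  have Af: "\<forall>e\<in>U. card {i \<in> {..<n}. e \<in> A i} \<le> b" using A(1) unfolding \<Omega>_def feasible_def by auto
  interpret opt U n b k eps d t A using AU Af by unfold_locales auto
  have "OPT U n b t = sum va {..<n}" unfolding A(2) welfare_def va_def by simp
  also have "\<dots> \<le> 100 * DD * Lr * measure_pmf.expectation (coins n b mm d) Wf" by (rule main_bound)
  also have "Wf = (\<lambda>c. welfare n t (mpu_alloc U n b eps t c))"
    unfolding Wf_def welfare_def alloc_eq by simp
  finally show ?thesis unfolding DD_def Lr_def mm_def .
qed

theorem theorem6:
  shows "(\<forall>U n b k eps c. finite U \<and> U \<noteq> {} \<and> 1 \<le> n \<and> 1 \<le> b \<and> 1 \<le> k \<and> 0 < eps \<and> eps < 1 \<longrightarrow>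
            truthful_verif U n k (\<lambda>decl. mpu_alloc U n b eps decl c))
       \<and> (\<forall>U n b k eps c decl. finite U \<and> U \<noteq> {} \<and> 1 \<le> n \<and> 1 \<le> b \<and> 1 \<le> k \<and> 0 < eps \<and> eps < 1 \<and>
            (\<forall>i<n. valid_type U k (decl i)) \<longrightarrow>
            feasible U n b (mpu_alloc U n b eps decl c))
       \<and> (\<forall>eps. 0 < eps \<and> eps < 1 \<longrightarrow>
           (\<exists>C>0. \<forall>U n b k d t. finite U \<and> U \<noteq> {} \<and> 1 \<le> n \<and> 1 \<le> b \<and> 1 \<le> k \<and>
              (\<forall>i<n. valid_type U k (t i)) \<and>
              (\<forall>i<n. \<forall>S\<in>snd (t i). 0 < val (t i) S \<longrightarrow> card S \<le> d) \<and>
              (\<exists>i<n. \<exists>S\<in>snd (t i). 0 < val (t i) S \<and> card S = d) \<longrightarrow>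
              OPT U n b t \<le> C * real d powr (1 / real b) * log 2 (real (4 * b * card U)) *
                measure_pmf.expectation (coins n b (card U) d)
                  (\<lambda>c. welfare n t (mpu_alloc U n b eps t c))))"
proof (intro conjI allI impI)
  fix U :: "nat set" and n b k :: nat and eps :: real and c :: "nat \<Rightarrow> bool"
  assume h: "finite U \<and> U \<noteq> {} \<and> 1 \<le> n \<and> 1 \<le> b \<and> 1 \<le> k \<and> 0 < eps \<and> eps < 1"
  then show "truthful_verif U n k (\<lambda>decl. mpu_alloc U n b eps decl c)"
    using truthful_main by blast
next
  fix U :: "nat set" and n b k :: nat and eps :: real and c :: "nat \<Rightarrow> bool" and decl :: "nat \<Rightarrow> decl"
  assume h: "finite U \<and> U \<noteq> {} \<and> 1 \<le> n \<and> 1 \<le> b \<and> 1 \<le> k \<and> 0 < eps \<and> eps < 1 \<and>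
            (\<forall>i<n. valid_type U k (decl i))"
  then show "feasible U n b (mpu_alloc U n b eps decl c)"
    unfolding alloc_eq using feas_main by blast
next
  fix eps :: real
  assume e: "0 < eps \<and> eps < 1"
  show "\<exists>C>0. \<forall>U n b k d t. finite U \<and> U \<noteq> {} \<and> 1 \<le> n \<and> 1 \<le> b \<and> 1 \<le> k \<and>
              (\<forall>i<n. valid_type U k (t i)) \<and>
              (\<forall>i<n. \<forall>S\<in>snd (t i). 0 < val (t i) S \<longrightarrow> card S \<le> d) \<and>
              (\<exists>i<n. \<exists>S\<in>snd (t i). 0 < val (t i) S \<and> card S = d) \<longrightarrow>
              OPT U n b t \<le> C * real d powr (1 / real b) * log 2 (real (4 * b * card U)) *
                measure_pmf.expectation (coins n b (card U) d)
                  (\<lambda>c. welfare n t (mpu_alloc U n b eps t c))"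
  proof (rule exI[of _ 100], intro conjI allI impI)
    show "(0::real) < 100" by simp
    fix U :: "nat set" and n b k d :: nat and t :: "nat \<Rightarrow> decl"
    assume "finite U \<and> U \<noteq> {} \<and> 1 \<le> n \<and> 1 \<le> b \<and> 1 \<le> k \<and>
              (\<forall>i<n. valid_type U k (t i)) \<and>
              (\<forall>i<n. \<forall>S\<in>snd (t i). 0 < val (t i) S \<longrightarrow> card S \<le> d) \<and>
              (\<exists>i<n. \<exists>S\<in>snd (t i). 0 < val (t i) S \<and> card S = d)"
    then show "OPT U n b t \<le> 100 * real d powr (1 / real b) * log 2 (real (4 * b * card U)) *
                measure_pmf.expectation (coins n b (card U) d)
                  (\<lambda>c. welfare n t (mpu_alloc U n b eps t c))"
      using part3[of eps U n b k t d] e by blast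
  qed
qed


end
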